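(* Let $E$ be a vector lattice, and suppose that the order continuous dual $E^\sim_n$ has an ideal $I$ that separates the points of $E$. Suppose that $C_{\mathrm{u}|\sigma|(E,I)}=E$ or, equivalently, that $E$ has the countable sup property (this holds in particular when $C_{\mathrm{u}|\sigma|(E,I)}$ has a countable order basis, or when $\mathrm{u}|\sigma|(E,I)$ is metrisable). Let $S$ be a convex subset of $E$ and let $x$ belong to the $\sigma(E,I)$-closure of $S$. Then there exists a sequence in $S$ that is uo-convergent to $x$.
   Context: All vector lattices are real and Archimedean. $E^\sim_n$ is the order continuous dual of $E$. $\sigma(E,I)$ is the weak topology on $E$ induced by $I$. The absolute weak topology $|\sigma|(E,I)$ is the locally convex locally solid topology generated by the lattice seminorms $p_\varphi(x)=|\varphi|(|x|)$, $\varphi\in I$. For a locally solid topology $\tau$ on $E$, $\mathrm{u}\tau$ is the locally solid topology with neighbourhood basis at zero the sets $\{x\in E: |x|\wedge|y|\in V\}$, with $V$ ranging over solid $\tau$-neighbourhoods of zero and $y$ over $E$. A sequence $(V_n)$ of neighbourhoods of zero is normal if $V_{n+1}+V_{n+1}\subseteq V_n$; the carrier $C_\tau$ is the union of the disjoint complements $N^{\mathrm d}$ where $N=\bigcap_nV_n$ ranges over intersections of normal sequences of solid $\tau$-neighbourhoods of zero. Order basis: non-empty $A$ with $A^{\mathrm d}=\{0\}$. Countable sup property: every subset with a supremum contains an at most countable subset with the same supremum. Uo-convergence: $|x_n-x|\wedge|y|\to0$ in order for all $y\in E$, where order convergence of a net means there is a net $y_\beta\downarrow0$ such that for each $\beta_0$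 eventually $|x_\alpha-x|\leq y_{\beta_0}$. *)

theory Defs
  imports "HOL-Analysis.Analysis"
begin

class vector_lattice = ordered_real_vector + lattice +
  assumes archimedean:
    "0 \<le> x \<Longrightarrow> (\<And>n::nat. real n *\<^sub>R x \<le> y) \<Longrightarrow> x = 0"


definition vabs :: "'a::vector_lattice \<Rightarrow> 'a" where
  "vabs x = sup x (- x)"

definition is_lub :: "'a::vector_lattice set \<Rightarrow> 'a \<Rightarrow> bool" where
  "is_lub A s \<longleftrightarrow> (\<forall>a\<in>A. a \<le> s) \<and> (\<forall>u. (\<forall>a\<in>A. a \<le> u) \<longrightarrow> s \<le> u)"

definition is_glb :: "'a::vector_lattice set \<Rightarrow> 'a \<Rightarrow> bool" where
  "is_glb A s \<longleftrightarrow> (\<forall>a\<in>A. s \<le> a) \<and> (\<forall>u. (\<forall>a\<in>A. u \<le> a) \<longrightarrow> u \<le> s)"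

text \<open>A downward directed set with infimum 0; such a set, indexed by itself,
  is a net decreasing to 0 (and the range of every net \<open>y\<^sub>\<beta> \<down> 0\<close> is such a set).\<close>
definition down_to_zero :: "'a::vector_lattice set \<Rightarrow> bool" where
  "down_to_zero D \<longleftrightarrow> D \<noteq> {} \<and> (\<forall>a\<in>D. \<forall>b\<in>D. \<exists>c\<in>D. c \<le> a \<and> c \<le> b) \<and> is_glb D 0"

definition order_conv :: "(nat \<Rightarrow> 'a::vector_lattice) \<Rightarrow> 'a \<Rightarrow> bool" where
  "order_conv z x \<longleftrightarrow> (\<exists>D. down_to_zero D \<and>
      (\<forall>d\<in>D. \<exists>N. \<forall>n\<ge>N. vabs (z n - x) \<le> d))"

definition uo_conv :: "(nat \<Rightarrow> 'a::vector_lattice) \<Rightarrow> 'a \<Rightarrow> bool" where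
  "uo_conv z x \<longleftrightarrow> (\<forall>y. order_conv (\<lambda>n. inf (vabs (z n - x)) (vabs y)) 0)"

definition countable_sup_property :: "'a::vector_lattice itself \<Rightarrow> bool" where
  "countable_sup_property _ \<longleftrightarrow> (\<forall>(A::'a set) s. is_lub A s \<longrightarrow> (\<exists>B\<subseteq>A. countable B \<and> is_lub B s))"

definition order_dual :: "('a::vector_lattice \<Rightarrow> real) set" where
  "order_dual = {\<phi>. linear \<phi> \<and>
      (\<forall>a. 0 \<le> a \<longrightarrow> (\<exists>M. \<forall>y. vabs y \<le> a \<longrightarrow> \<bar>\<phi> y\<bar> \<le> M))}"

definition oc_dual :: "('a::vector_lattice \<Rightarrow> real) set" where
  "oc_dual = {\<phi>\<in>order_dual. \<forall>D. down_to_zero D \<longrightarrow>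
      (\<forall>\<epsilon>>0. \<exists>d\<in>D. \<bar>\<phi> d\<bar> < \<epsilon>)}"

text \<open>Modulus of a regular functional (Riesz--Kantorovich), on positive elements.\<close>
definition fabs :: "('a::vector_lattice \<Rightarrow> real) \<Rightarrow> 'a \<Rightarrow> real" where
  "fabs \<phi> x = Sup {\<phi> y | y. vabs y \<le> x}"

definition ideal_of_oc_dual :: "('a::vector_lattice \<Rightarrow> real) set \<Rightarrow> bool" where
  "ideal_of_oc_dual I \<longleftrightarrow> I \<subseteq> oc_dual \<and> (\<lambda>_. 0) \<in> I \<and>
     (\<forall>\<phi>\<in>I. \<forall>\<psi>\<in>I. (\<lambda>x. \<phi> x + \<psi> x) \<in> I) \<and>
     (\<forall>\<phi>\<in>I. \<forall>c::real. (\<lambda>x. c * \<phi> x) \<in> I) \<and>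
     (\<forall>\<psi>\<in>I. \<forall>\<phi>\<in>oc_dual. (\<forall>x. 0 \<le> x \<longrightarrow> fabs \<phi> x \<le> fabs \<psi> x) \<longrightarrow> \<phi> \<in> I)"

definition separates_points :: "('a::vector_lattice \<Rightarrow> real) set \<Rightarrow> bool" where
  "separates_points I \<longleftrightarrow> (\<forall>x. x \<noteq> 0 \<longrightarrow> (\<exists>\<phi>\<in>I. \<phi> x \<noteq> 0))"

text \<open>Closure of S in the weak topology \<open>\<sigma>(E,I)\<close>, via its basic neighbourhoods.\<close>
definition weak_closure :: "('a::vector_lattice \<Rightarrow> real) set \<Rightarrow> 'a set \<Rightarrow> 'a set" where
  "weak_closure I S = {x. \<forall>F. finite F \<and> F \<subseteq> I \<longrightarrow>
      (\<forall>\<epsilon>>0. \<exists>s\<in>S. \<forall>\<phi>\<in>F. \<bar>\<phi> s - \<phi> x\<bar> < \<epsilon>)}"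

end

theory Submission
  imports Defs "HOL-Library.Lattice_Algebras"
begin

context vector_lattice begin
subclass lattice_ab_group_add ..
end

lemma vabs_ge0: "0 \<le> vabs (x::'a::vector_lattice)"
proof -
  have "x + (-x) \<le> vabs x + vabs x" unfolding vabs_def
    by (intro add_mono) auto
  then show ?thesis by simp
qed

lemma vabs_ge: "(x::'a::vector_lattice) \<le> vabs x" "- x \<le> vabs x"
  unfolding vabs_def by auto

lemma vabs_le_iff: "vabs (x::'a::vector_lattice) \<le> a \<longleftrightarrow> x \<le> a \<and> - x \<le> a"
  unfolding vabs_def by auto

lemma vabs_nonneg: "0 \<le> (x::'a::vector_lattice) \<Longrightarrow> vabs x = x"
  unfolding vabs_def by (meson dual_order.trans neg_le_0_iff_le sup.absorb1)

lemma vabs_minus: "vabs (- (x::'a::vector_lattice)) = vabs x"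
  unfolding vabs_def by (simp add: sup.commute)

lemma vabs_triangle: "vabs ((x::'a::vector_lattice) + y) \<le> vabs x + vabs y"
  unfolding vabs_le_iff using vabs_ge[of x] vabs_ge[of y]
  by (metis add_mono minus_add_distrib add.commute)

lemma vabs_zero_iff: "vabs (x::'a::vector_lattice) = 0 \<longleftrightarrow> x = 0"
  proof
  assume "vabs x = 0"
  then have 1: "x \<le> 0" and "- x \<le> 0" using vabs_ge[of x] by auto
  then have "0 \<le> x" by simp
  with 1 show "x = 0" by (rule antisym)
qed (simp add: vabs_def)

lemma scale_sup: "0 \<le> c \<Longrightarrow> c *\<^sub>R sup a b = sup (c *\<^sub>R a) (c *\<^sub>R (b::'a::vector_lattice))"
proof (cases "c = 0")
  case True then show ?thesis by simp
next
  case False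
  assume c: "0 \<le> c"
  then have cp: "0 < c" using False by simp
  have 1: "sup (c *\<^sub>R a) (c *\<^sub>R b) \<le> c *\<^sub>R sup a b"
    using c by (simp add: scaleR_left_mono)
  have "a \<le> inverse c *\<^sub>R sup (c *\<^sub>R a) (c *\<^sub>R b)"
  proof -
    have "inverse c *\<^sub>R (c *\<^sub>R a) \<le> inverse c *\<^sub>R sup (c *\<^sub>R a) (c *\<^sub>R b)"
      using cp by (intro scaleR_left_mono) auto
    then show ?thesis using cp by simp
  qed
  moreover have "b \<le> inverse c *\<^sub>R sup (c *\<^sub>R a) (c *\<^sub>R b)"
  proof -
    have "inverse c *\<^sub>R (c *\<^sub>R b) \<le> inverse c *\<^sub>R sup (c *\<^sub>R a) (c *\<^sub>R b)"
      using cp by (intro scaleR_left_mono) auto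
    then show ?thesis using cp by simp
  qed
  ultimately have "sup a b \<le> inverse c *\<^sub>R sup (c *\<^sub>R a) (c *\<^sub>R b)" by simp
  then have "c *\<^sub>R sup a b \<le> c *\<^sub>R (inverse c *\<^sub>R sup (c *\<^sub>R a) (c *\<^sub>R b))"
    using cp by (intro scaleR_left_mono) auto
  then have "c *\<^sub>R sup a b \<le> sup (c *\<^sub>R a) (c *\<^sub>R b)" using cp by simp
  then show ?thesis using 1 by (rule antisym)
qed

lemma scale_inf: "0 \<le> c \<Longrightarrow> c *\<^sub>R inf a b = inf (c *\<^sub>R a) (c *\<^sub>R (b::'a::vector_lattice))"
proof -
  assume c: "0 \<le> c"
  have "c *\<^sub>R inf a b = c *\<^sub>R (- sup (-a) (-b))"
    by (subst inf_eq_neg_sup) (rule refl)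
  also have "\<dots> = - (c *\<^sub>R sup (-a) (-b))" by (rule scaleR_minus_right)
  also have "\<dots> = - sup (c *\<^sub>R (-a)) (c *\<^sub>R (-b))" using scale_sup[OF c] by metis
  also have "\<dots> = - sup (- (c *\<^sub>R a)) (- (c *\<^sub>R b))" by (simp only: scaleR_minus_right)
  also have "\<dots> = inf (c *\<^sub>R a) (c *\<^sub>R b)" by (rule inf_eq_neg_sup[symmetric])
  finally show ?thesis .
qed

lemma vabs_scale: "vabs (c *\<^sub>R (x::'a::vector_lattice)) = \<bar>c\<bar> *\<^sub>R vabs x"
proof (cases "0 \<le> c")
  case True
  then show ?thesis unfolding vabs_def using scale_sup[OF True, of x "-x"] by simp
next
  case False
  then have "0 \<le> - c" by simp
  then have "(-c) *\<^sub>R vabs x = vabs (c *\<^sub>R x)"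
    unfolding vabs_def using scale_sup[of "-c" x "-x"] by (simp add: sup.commute)
  then show ?thesis using False by simp
qed

lemma riesz_decomp: "0 \<le> (u::'a::vector_lattice) \<Longrightarrow> u \<le> a + b \<Longrightarrow> 0 \<le> b \<Longrightarrow> u - inf u a \<le> b"
proof -
  assume "0 \<le> u" "u \<le> a + b" "0 \<le> b"
  have "u - inf u a = u + sup (-u) (-a)" by (simp add: diff_inf_eq_sup)
  also have "\<dots> = sup 0 (u - a)" by (simp add: add_sup_distrib_left)
  also have "\<dots> \<le> b" using \<open>u \<le> a + b\<close> \<open>0 \<le> b\<close>
    by (simp add: diff_le_eq add.commute)
  finally show ?thesis .
qed

lemma inf_add_le: "0 \<le> (b::'a::vector_lattice) \<Longrightarrow> 0 \<le> y \<Longrightarrow> 0 \<le> z \<Longrightarrow> inf b (y + z) \<le> inf b y + inf b z"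
proof -
  assume b: "0 \<le> b" and y: "0 \<le> y" and z: "0 \<le> z"
  define w where "w = inf b (y + z)"
  have "w - inf b y = w + sup (-b) (-y)" by (simp add: diff_inf_eq_sup)
  also have "\<dots> = sup (w - b) (w - y)" by (simp add: add_sup_distrib_left)
  also have "\<dots> \<le> inf b z"
  proof (rule sup_least)
    have "w - b \<le> 0" unfolding w_def by simp
    also have "0 \<le> inf b z" using b z by simp
    finally show "w - b \<le> inf b z" .
    have "w - y \<le> z" unfolding w_def by (simp add: diff_le_eq add.commute le_infI2)
    moreover have "w - y \<le> b" unfolding w_def using y
      by (metis diff_le_eq inf.coboundedI1 le_add_same_cancel1)
    ultimately show "w - y \<le> inf b z" by simp
  qed
  finally have "w \<le> inf b z + inf b y" by (simp only: diff_le_eq)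
  then show ?thesis unfolding w_def by (metis add.commute)
qed

lemma disj_add_eq_sup: "inf (b::'a::vector_lattice) c = 0 \<Longrightarrow> b + c = sup b c"
proof -
  assume "inf b c = 0"
  then show ?thesis using add_eq_inf_sup[of b c] by (metis add.right_neutral)
qed

lemma disj_scale_nat: "0 \<le> (b::'a::vector_lattice) \<Longrightarrow> 0 \<le> y \<Longrightarrow> inf b y = 0 \<Longrightarrow> inf b (of_nat k *\<^sub>R y) = 0"
proof (induction k)
  case 0 then show ?case by (simp add: inf_absorb2)
next
  case (Suc k)
  have "0 \<le> of_nat k *\<^sub>R y" using Suc.prems by (simp add: scaleR_nonneg_nonneg)
  then have "inf b (of_nat k *\<^sub>R y + y) \<le> inf b (of_nat k *\<^sub>R y) + inf b y"
    using Suc.prems by (intro inf_add_le) auto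
  then have "inf b (of_nat (Suc k) *\<^sub>R y) \<le> 0" using Suc by (simp add: algebra_simps)
  moreover have "0 \<le> inf b (of_nat (Suc k) *\<^sub>R y)" using Suc.prems by (simp del: of_nat_Suc add: scaleR_nonneg_nonneg)
  ultimately show ?case by (rule antisym)
qed

lemma archim0: "0 \<le> (h::'a::vector_lattice) \<Longrightarrow> (\<And>k::nat. of_nat k *\<^sub>R h \<le> w) \<Longrightarrow> h = 0"
  using archimedean[of h w] by simp

definition sublin :: "('a::real_vector \<Rightarrow> real) \<Rightarrow> bool" where
  "sublin q \<longleftrightarrow> (\<forall>x y. q (x + y) \<le> q x + q y) \<and> (\<forall>c x. 0 < c \<longrightarrow> q (c *\<^sub>R x) = c * q x)"

lemma sublin_0: "sublin q \<Longrightarrow> q 0 = 0"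
proof -
  assume "sublin q"
  then have h: "\<And>c x. 0 < c \<Longrightarrow> q (c *\<^sub>R x) = c * q x" unfolding sublin_def by blast
  have "q ((2::real) *\<^sub>R 0) = 2 * q 0" by (rule h) simp
  then show ?thesis by simp
qed

lemma sublin_add: "sublin q \<Longrightarrow> q (x + y) \<le> q x + q y"
  unfolding sublin_def by blast

lemma sublin_scale: "sublin q \<Longrightarrow> 0 \<le> c \<Longrightarrow> q (c *\<^sub>R x) = c * q x"
  using sublin_0[of q] unfolding sublin_def by (cases "c = 0") auto

lemma sublin_neg: "sublin q \<Longrightarrow> - q (- x) \<le> q x"
proof -
  assume q: "sublin q"
  have "q (x + - x) \<le> q x + q (- x)" using sublin_add[OF q] .
  then show ?thesis using sublin_0[OF q] by simp
qed

definition sepi :: "('a \<Rightarrow> real) \<Rightarrow> ('a \<times> real) set" where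
  "sepi r = {(x, t). r x < t}"

lemma sepi_subset_iff: "sepi r1 \<subseteq> sepi r2 \<longleftrightarrow> (\<forall>x. r2 x \<le> r1 x)"
proof
  assume h: "sepi r1 \<subseteq> sepi r2"
  show "\<forall>x. r2 x \<le> r1 x"
  proof (rule allI, rule ccontr)
    fix x assume "\<not> r2 x \<le> r1 x"
    then have "(x, r2 x) \<in> sepi r1" unfolding sepi_def by auto
    with h have "(x, r2 x) \<in> sepi r2" by blast
    then show False unfolding sepi_def by auto
  qed
next
  assume "\<forall>x. r2 x \<le> r1 x"
  then show "sepi r1 \<subseteq> sepi r2" unfolding sepi_def by (auto intro: le_less_trans)
qed

lemma minimal_sublin_linear:
  fixes r :: "'a::real_vector \<Rightarrow> real"
  assumes r: "sublin r"
    and minr: "\<And>r'. sublin r' \<Longrightarrow> (\<forall>x. r' x \<le> r x) \<Longrightarrow> r' = r"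
  shows "linear r"
proof -
  have r0: "r 0 = 0" using sublin_0[OF r] .
  have sup_add: "r y + r z \<le> r (y + z)" for y z
  proof -
    define rz where "rz y = (INF t\<in>{0::real..}. r (y + t *\<^sub>R z) - t * r z)" for y
    have lb: "- r (- y) \<le> r (y + t *\<^sub>R z) - t * r z" if "0 \<le> t" for y t
    proof -
      have "r (t *\<^sub>R z) \<le> r (y + t *\<^sub>R z) + r (- y)"
        using sublin_add[OF r, of "y + t *\<^sub>R z" "- y"] by simp
      then show ?thesis using sublin_scale[OF r that] by simp
    qed
    have bdd: "bdd_below ((\<lambda>t. r (y + t *\<^sub>R z) - t * r z) ` {0..})" for y
      using lb by (intro bdd_belowI2[where m = "- r (- y)"]) auto
    have rz_le: "rz y \<le> r (y + t *\<^sub>R z) - t * r z" if "0 \<le> t" for y t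
      unfolding rz_def using bdd[of y] that by (intro cINF_lower) auto
    have rz_ge: "c \<le> rz y" if "\<And>t. 0 \<le> t \<Longrightarrow> c \<le> r (y + t *\<^sub>R z) - t * r z" for c y
      unfolding rz_def using that by (intro cINF_greatest) auto
    have "sublin rz"
      unfolding sublin_def
    proof (intro conjI allI impI)
      fix x y
      have "rz (x + y) - rz y \<le> rz x"
      proof (rule rz_ge)
        fix t1 :: real assume t1: "0 \<le> t1"
        have "rz (x + y) - (r (x + t1 *\<^sub>R z) - t1 * r z) \<le> rz y"
        proof (rule rz_ge)
          fix t2 :: real assume t2: "0 \<le> t2"
          have "rz (x + y) \<le> r ((x + y) + (t1 + t2) *\<^sub>R z) - (t1 + t2) * r z"
            using t1 t2 by (intro rz_le) auto
          also have "r ((x + y) + (t1 + t2) *\<^sub>R z) \<le> r (x + t1 *\<^sub>R z) + r (y + t2 *\<^sub>R z)"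
            using sublin_add[OF r, of "x + t1 *\<^sub>R z" "y + t2 *\<^sub>R z"]
            by (simp add: algebra_simps)
          finally show "rz (x + y) - (r (x + t1 *\<^sub>R z) - t1 * r z) \<le> r (y + t2 *\<^sub>R z) - t2 * r z"
            by (simp add: algebra_simps)
        qed
        then show "rz (x + y) - rz y \<le> r (x + t1 *\<^sub>R z) - t1 * r z" by simp
      qed
      then show "rz (x + y) \<le> rz x + rz y" by simp
    next
      fix c :: real and x assume c: "0 < c"
      have 1: "rz (c *\<^sub>R x) \<le> c * rz x"
      proof -
        have "rz (c *\<^sub>R x) / c \<le> rz x"
        proof (rule rz_ge)
          fix t :: real assume t: "0 \<le> t"
          have "rz (c *\<^sub>R x) \<le> r (c *\<^sub>R x + (c * t) *\<^sub>R z) - (c * t) * r z"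
            using c t by (intro rz_le) auto
          also have "r (c *\<^sub>R x + (c * t) *\<^sub>R z) = c * r (x + t *\<^sub>R z)"
            using sublin_scale[OF r, of c "x + t *\<^sub>R z"] c by (simp add: algebra_simps)
          finally have "rz (c *\<^sub>R x) \<le> c * (r (x + t *\<^sub>R z) - t * r z)"
            by (simp add: algebra_simps)
          then show "rz (c *\<^sub>R x) / c \<le> r (x + t *\<^sub>R z) - t * r z"
            using c by (simp add: divide_le_eq mult.commute)
        qed
        then show ?thesis using c by (simp add: divide_le_eq mult.commute)
      qed
      have 2: "c * rz x \<le> rz (c *\<^sub>R x)"
      proof (rule rz_ge)
        fix t :: real assume t: "0 \<le> t"
        have "rz x \<le> r (x + (t / c) *\<^sub>R z) - (t / c) * r z"
          using c t by (intro rz_le) auto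
        then have "c * rz x \<le> c * (r (x + (t / c) *\<^sub>R z) - (t / c) * r z)"
          using c by simp
        also have "\<dots> = r (c *\<^sub>R x + t *\<^sub>R z) - t * r z"
          using sublin_scale[OF r, of c "x + (t / c) *\<^sub>R z"] c
          by (simp add: algebra_simps)
        finally show "c * rz x \<le> r (c *\<^sub>R x + t *\<^sub>R z) - t * r z" .
      qed
      from 1 2 show "rz (c *\<^sub>R x) = c * rz x" by simp
    qed
    moreover have "\<forall>x. rz x \<le> r x"
      using rz_le[of 0] by simp
    ultimately have "rz = r" by (rule minr)
    then have "r y \<le> r (y + 1 *\<^sub>R z) - 1 * r z" using rz_le[of 1 y] by simp
    then show ?thesis by simp
  qed
  have add: "r (y + z) = r y + r z" for y z
    using sup_add[of y z] sublin_add[OF r, of y z] by simp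
  have neg: "r (- y) = - r y" for y
    using add[of y "- y"] r0 by simp
  show "linear r"
  proof (rule linearI)
    fix b1 b2 show "r (b1 + b2) = r b1 + r b2" by (rule add)
  next
    fix c :: real and b
    show "r (c *\<^sub>R b) = c *\<^sub>R r b"
    proof (cases "0 \<le> c")
      case True then show ?thesis using sublin_scale[OF r True] by simp
    next
      case False
      then have "r (c *\<^sub>R b) = r (- ((- c) *\<^sub>R b))" by simp
      also have "\<dots> = - ((- c) * r b)" using neg sublin_scale[OF r, of "- c" b] False by simp
      finally show ?thesis by simp
    qed
  qed
qed

theorem hahn_banach_sublin:
  fixes q :: "'a::real_vector \<Rightarrow> real"
  assumes q: "sublin q"
  shows "\<exists>f. linear f \<and> (\<forall>x. f x \<le> q x)"
proof -
  define \<Sigma> where "\<Sigma> = {r. sublin r \<and> (\<forall>x. r x \<le> q x)}"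
  have q\<Sigma>: "q \<in> \<Sigma>" unfolding \<Sigma>_def using q by simp
  have "\<exists>M\<in>sepi ` \<Sigma>. \<forall>X\<in>sepi ` \<Sigma>. M \<subseteq> X \<longrightarrow> X = M"
  proof (rule subset_Zorn)
    fix C assume ch: "subset.chain (sepi ` \<Sigma>) C"
    show "\<exists>U\<in>sepi ` \<Sigma>. \<forall>X\<in>C. X \<subseteq> U"
    proof (cases "C = {}")
      case True then show ?thesis using q\<Sigma> by blast
    next
      case False
      define R where "R = {r\<in>\<Sigma>. sepi r \<in> C}"
      have CR: "C = sepi ` R" using ch unfolding R_def subset.chain_def by blast
      have Rne: "R \<noteq> {}" using CR False by blast
      have Rtot: "(\<forall>x. r1 x \<le> r2 x) \<or> (\<forall>x. r2 x \<le> r1 x)" if "r1 \<in> R" "r2 \<in> R" for r1 r2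
      proof -
        have "sepi r1 \<subseteq> sepi r2 \<or> sepi r2 \<subseteq> sepi r1"
          using ch that unfolding R_def subset.chain_def by blast
        then show ?thesis unfolding sepi_subset_iff by blast
      qed
      have Rsub: "sublin r" "\<forall>x. r x \<le> q x" if "r \<in> R" for r
        using that unfolding R_def \<Sigma>_def by auto
      define m where "m x = (INF r\<in>R. r x)" for x
      have bdd: "bdd_below ((\<lambda>r. r x) ` R)" for x
      proof (rule bdd_belowI2[where m = "- q (- x)"])
        fix r assume "r \<in> R"
        then have "- r (- x) \<le> r x" "r (- x) \<le> q (- x)" using sublin_neg Rsub by auto
        then show "- q (- x) \<le> r x" by simp
      qed
      have m_le: "m x \<le> r x" if "r \<in> R" for r x
        unfolding m_def using bdd that by (intro cINF_lower) auto
      have m_ge: "c \<le> m x" if "\<And>r. r \<in> R \<Longrightarrow> c \<le> r x" for c x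
        unfolding m_def using that Rne by (intro cINF_greatest) auto
      have "sublin m"
        unfolding sublin_def
      proof (intro conjI allI impI)
        fix x y
        have "m (x + y) - m y \<le> m x"
        proof (rule m_ge)
          fix r1 assume r1: "r1 \<in> R"
          have "m (x + y) - r1 x \<le> m y"
          proof (rule m_ge)
            fix r2 assume r2: "r2 \<in> R"
            show "m (x + y) - r1 x \<le> r2 y"
              using Rtot[OF r1 r2]
            proof
              assume h: "\<forall>x. r1 x \<le> r2 x"
              have "m (x + y) \<le> r1 (x + y)" using m_le r1 by blast
              also have "\<dots> \<le> r1 x + r1 y" using sublin_add Rsub(1)[OF r1] by blast
              moreover have "r1 y \<le> r2 y" using h by blast
              ultimately show ?thesis by simp
            next
              assume h: "\<forall>x. r2 x \<le> r1 x"
              have "m (x + y) \<le> r2 (x + y)" using m_le r2 by blast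
              also have "\<dots> \<le> r2 x + r2 y" using sublin_add Rsub(1)[OF r2] by blast
              moreover have "r2 x \<le> r1 x" using h by blast
              ultimately show ?thesis by simp
            qed
          qed
          then show "m (x + y) - m y \<le> r1 x" by simp
        qed
        then show "m (x + y) \<le> m x + m y" by simp
      next
        fix c :: real and x assume c: "0 < c"
        have 1: "m (c *\<^sub>R x) \<le> c * m x"
        proof -
          have "m (c *\<^sub>R x) / c \<le> m x"
          proof (rule m_ge)
            fix r assume r: "r \<in> R"
            have "m (c *\<^sub>R x) \<le> r (c *\<^sub>R x)" using m_le r by blast
            also have "\<dots> = c * r x" using sublin_scale[OF Rsub(1)[OF r]] c by simp
            finally show "m (c *\<^sub>R x) / c \<le> r x" using c by (simp add: divide_le_eq mult.commute)
          qed
          then show ?thesis using c by (simp add: divide_le_eq mult.commute)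
        qed
        have 2: "c * m x \<le> m (c *\<^sub>R x)"
        proof (rule m_ge)
          fix r assume r: "r \<in> R"
          have "c * m x \<le> c * r x" using m_le[OF r] c by simp
          also have "\<dots> = r (c *\<^sub>R x)" using sublin_scale[OF Rsub(1)[OF r]] c by simp
          finally show "c * m x \<le> r (c *\<^sub>R x)" .
        qed
        from 1 2 show "m (c *\<^sub>R x) = c * m x" by simp
      qed
      moreover have "\<forall>x. m x \<le> q x"
        using Rne m_le Rsub(2) by (meson all_not_in_conv order_trans)
      ultimately have "m \<in> \<Sigma>" unfolding \<Sigma>_def by simp
      moreover have "\<forall>X\<in>C. X \<subseteq> sepi m"
        unfolding CR using m_le by (auto simp: sepi_subset_iff)
      ultimately show ?thesis by blast
    qed
  qed
  then obtain r0 where r0: "r0 \<in> \<Sigma>" and max: "\<And>X. X \<in> sepi ` \<Sigma> \<Longrightarrow> sepi r0 \<subseteq> X \<Longrightarrow> X = sepi r0"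
    by blast
  have "linear r0"
  proof (rule minimal_sublin_linear)
    show "sublin r0" using r0 unfolding \<Sigma>_def by simp
  next
    fix r' assume r': "sublin r'" "\<forall>x. r' x \<le> r0 x"
    then have "r' \<in> \<Sigma>" using r0 unfolding \<Sigma>_def by (auto intro: order_trans)
    moreover have "sepi r0 \<subseteq> sepi r'" using r' sepi_subset_iff by blast
    ultimately have "sepi r' = sepi r0" using max by blast
    then have "\<forall>x. r0 x \<le> r' x" using sepi_subset_iff by blast
    with r' show "r' = r0" by (intro ext antisym) auto
  qed
  then show ?thesis using r0 unfolding \<Sigma>_def by blast
qed

lemma mazur_orlicz:
  fixes P :: "'a::real_vector \<Rightarrow> real"
  assumes P: "sublin P" and A: "convex A" "A \<noteq> {}" and lb: "\<And>a. a \<in> A \<Longrightarrow> \<alpha> \<le> P a"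
  shows "\<exists>f. linear f \<and> (\<forall>x. f x \<le> P x) \<and> (\<forall>a\<in>A. \<alpha> \<le> f a)"
proof -
  define g where "g y p = P (y + snd p *\<^sub>R fst p) - snd p * \<alpha>" for y p
  define q where "q y = (INF p\<in>A \<times> {0..}. g y p)" for y
  have lbg: "- P (- y) \<le> g y p" if hp: "p \<in> A \<times> {0..}" for y p
  proof -
    obtain a l where p: "p = (a, l)" "a \<in> A" "0 \<le> l" using hp by (cases p) auto
    have "P (l *\<^sub>R a) \<le> P (y + l *\<^sub>R a) + P (- y)"
      using sublin_add[OF P, of "y + l *\<^sub>R a" "- y"] by simp
    moreover have "P (l *\<^sub>R a) = l * P a" using sublin_scale[OF P p(3)] .
    moreover have "l * \<alpha> \<le> l * P a" using lb[OF p(2)] p(3) by (simp add: mult_left_mono)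
    ultimately show ?thesis unfolding g_def p by simp
  qed
  have ne: "A \<times> {0::real..} \<noteq> {}" using A(2) by auto
  have q_le: "q y \<le> g y (a, l)" if "a \<in> A" "0 \<le> l" for y a l
    unfolding q_def using that lbg
    by (intro cINF_lower bdd_belowI2[where m = "- P (- y)"]) auto
  have q_ge: "c \<le> q y" if "\<And>a l. a \<in> A \<Longrightarrow> 0 \<le> l \<Longrightarrow> c \<le> g y (a, l)" for c y
    unfolding q_def using that ne by (intro cINF_greatest) auto
  have "sublin q"
    unfolding sublin_def
  proof (intro conjI allI impI)
    fix x y
    have "q (x + y) - q y \<le> q x"
    proof (rule q_ge)
      fix a1 l1 assume a1: "a1 \<in> A" and l1: "0 \<le> (l1::real)"
      have "q (x + y) - g x (a1, l1) \<le> q y"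
      proof (rule q_ge)
        fix a2 l2 assume a2: "a2 \<in> A" and l2: "0 \<le> (l2::real)"
        have "q (x + y) \<le> g x (a1, l1) + g y (a2, l2)"
        proof (cases "l1 + l2 = 0")
          case True
          then have "l1 = 0" "l2 = 0" using l1 l2 by auto
          have "q (x + y) \<le> g (x + y) (a1, 0)" using q_le a1 by blast
          also have "\<dots> \<le> g x (a1, l1) + g y (a2, l2)"
            unfolding g_def using \<open>l1 = 0\<close> \<open>l2 = 0\<close> sublin_add[OF P, of x y] by simp
          finally show ?thesis .
        next
          case False
          define L where "L = l1 + l2"
          have Lp: "0 < L" using False l1 l2 unfolding L_def by simp
          define a where "a = (l1 / L) *\<^sub>R a1 + (l2 / L) *\<^sub>R a2"
          have aA: "a \<in> A" unfolding a_def using A(1) a1 a2 l1 l2 Lp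
            unfolding convex_def by (auto simp: add_divide_distrib[symmetric] L_def)
          have La: "L *\<^sub>R a = l1 *\<^sub>R a1 + l2 *\<^sub>R a2"
            unfolding a_def using Lp by (simp add: scaleR_add_right)
          have "q (x + y) \<le> g (x + y) (a, L)" using q_le aA Lp by simp
          also have "\<dots> = P ((x + l1 *\<^sub>R a1) + (y + l2 *\<^sub>R a2)) - (l1 + l2) * \<alpha>"
            unfolding g_def using La by (simp add: algebra_simps L_def)
          also have "\<dots> \<le> g x (a1, l1) + g y (a2, l2)"
            unfolding g_def using sublin_add[OF P, of "x + l1 *\<^sub>R a1" "y + l2 *\<^sub>R a2"]
            by (simp add: algebra_simps)
          finally show ?thesis .
        qed
        then show "q (x + y) - g x (a1, l1) \<le> g y (a2, l2)" by simp
      qed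
      then show "q (x + y) - q y \<le> g x (a1, l1)" by simp
    qed
    then show "q (x + y) \<le> q x + q y" by simp
  next
    fix c :: real and x assume c: "0 < c"
    have 1: "q (c *\<^sub>R x) \<le> c * q x"
    proof -
      have "q (c *\<^sub>R x) / c \<le> q x"
      proof (rule q_ge)
        fix a l assume a: "a \<in> A" and l: "0 \<le> (l::real)"
        have "q (c *\<^sub>R x) \<le> g (c *\<^sub>R x) (a, c * l)" using q_le a l c by simp
        also have "\<dots> = c * g x (a, l)"
          unfolding g_def using sublin_scale[OF P, of c "x + l *\<^sub>R a"] c
          by (simp add: algebra_simps)
        finally show "q (c *\<^sub>R x) / c \<le> g x (a, l)" using c
          by (simp add: divide_le_eq mult.commute)
      qed
      then show ?thesis using c by (simp add: divide_le_eq mult.commute)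
    qed
    have 2: "c * q x \<le> q (c *\<^sub>R x)"
    proof (rule q_ge)
      fix a l assume a: "a \<in> A" and l: "0 \<le> (l::real)"
      have "q x \<le> g x (a, l / c)" using q_le a l c by simp
      then have "c * q x \<le> c * g x (a, l / c)" using c by simp
      also have "\<dots> = g (c *\<^sub>R x) (a, l)"
        unfolding g_def using sublin_scale[OF P, of c "x + (l / c) *\<^sub>R a"] c
        by (simp add: algebra_simps)
      finally show "c * q x \<le> g (c *\<^sub>R x) (a, l)" .
    qed
    from 1 2 show "q (c *\<^sub>R x) = c * q x" by simp
  qed
  from hahn_banach_sublin[OF this] obtain f where f: "linear f" "\<And>x. f x \<le> q x" by blast
  obtain a0 where a0: "a0 \<in> A" using A(2) by blast
  have "f x \<le> P x" for x
  proof -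
    have "f x \<le> q x" by (rule f(2))
    also have "\<dots> \<le> g x (a0, 0)" using q_le a0 by simp
    finally show ?thesis unfolding g_def by simp
  qed
  moreover have "\<alpha> \<le> f a" if a: "a \<in> A" for a
  proof -
    have "f (- a) \<le> q (- a)" by (rule f(2))
    also have "\<dots> \<le> g (- a) (a, 1)" using q_le a by simp
    finally have "f (- a) \<le> - \<alpha>" unfolding g_def using sublin_0[OF P] by simp
    moreover have "f (- a) = - f a" using linear_neg[OF f(1)] .
    ultimately show ?thesis by simp
  qed
  ultimately show ?thesis using f(1) by blast
qed

definition posf :: "('a::vector_lattice \<Rightarrow> real) \<Rightarrow> bool" where
  "posf \<phi> \<longleftrightarrow> (\<forall>x. 0 \<le> x \<longrightarrow> 0 \<le> \<phi> x)"

lemma posf_mono: "linear \<phi> \<Longrightarrow> posf \<phi> \<Longrightarrow> x \<le> y \<Longrightarrow> \<phi> x \<le> \<phi> y"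
proof -
  assume l: "linear \<phi>" and p: "posf \<phi>" and xy: "x \<le> y"
  have "0 \<le> \<phi> (y - x)" using p xy unfolding posf_def by simp
  then show ?thesis using linear_diff[OF l] by simp
qed

lemma posf_abs: "linear \<phi> \<Longrightarrow> posf \<phi> \<Longrightarrow> \<bar>\<phi> x\<bar> \<le> \<phi> (vabs x)"
proof -
  assume l: "linear \<phi>" and p: "posf \<phi>"
  have "\<phi> x \<le> \<phi> (vabs x)" using posf_mono[OF l p vabs_ge(1)] .
  moreover have "\<phi> (- x) \<le> \<phi> (vabs x)" using posf_mono[OF l p vabs_ge(2)] .
  ultimately show ?thesis using linear_neg[OF l] by simp
qed

lemma posf_sublin: "linear \<phi> \<Longrightarrow> posf \<phi> \<Longrightarrow> sublin (\<lambda>x. \<phi> (vabs x))"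
  unfolding sublin_def
proof (intro conjI allI impI)
  fix x y
  assume l: "linear \<phi>" and p: "posf \<phi>"
  have "\<phi> (vabs (x + y)) \<le> \<phi> (vabs x + vabs y)" using posf_mono[OF l p vabs_triangle] .
  then show "\<phi> (vabs (x + y)) \<le> \<phi> (vabs x) + \<phi> (vabs y)" using linear_add[OF l] by simp
next
  fix c :: real and x
  assume l: "linear \<phi>" and p: "posf \<phi>" and c: "0 < c"
  show "\<phi> (vabs (c *\<^sub>R x)) = c * \<phi> (vabs x)"
    using c linear_scale[OF l] by (simp add: vabs_scale)
qed

lemma fabs_posf: "linear \<phi> \<Longrightarrow> posf \<phi> \<Longrightarrow> 0 \<le> x \<Longrightarrow> fabs \<phi> x = \<phi> x"
  unfolding fabs_def
proof (rule cSup_eq_maximum)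
  assume l: "linear \<phi>" and p: "posf \<phi>" and x: "0 \<le> x"
  show "\<phi> x \<in> {\<phi> y |y. vabs y \<le> x}" using vabs_nonneg[OF x] by force
  fix z assume "z \<in> {\<phi> y |y. vabs y \<le> x}"
  then obtain y where "z = \<phi> y" "vabs y \<le> x" by blast
  then show "z \<le> \<phi> x" using posf_abs[OF l p, of y] posf_mono[OF l p, of "vabs y" x] by simp
qed

lemma fabs_le_posf:
  assumes l: "linear \<phi>" and p: "posf \<phi>" and f: "\<And>y. \<bar>f y\<bar> \<le> \<phi> (vabs y)" and x: "0 \<le> x"
  shows "fabs f x \<le> \<phi> x"
  unfolding fabs_def
proof (rule cSup_least)
  have "vabs 0 \<le> x" using x by (simp add: vabs_def)
  then show "{f y |y. vabs y \<le> x} \<noteq> {}" by blast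
  fix z assume "z \<in> {f y |y. vabs y \<le> x}"
  then obtain y where "z = f y" "vabs y \<le> x" by blast
  then show "z \<le> \<phi> x" using f[of y] posf_mono[OF l p, of "vabs y" x] by simp
qed

lemma posf_order_dual: "linear \<phi> \<Longrightarrow> posf \<phi> \<Longrightarrow> \<phi> \<in> order_dual"
  unfolding order_dual_def
proof (intro CollectI conjI allI impI)
  fix a :: 'a assume l: "linear \<phi>" and p: "posf \<phi>" and "0 \<le> a"
  show "\<exists>M. \<forall>y. vabs y \<le> a \<longrightarrow> \<bar>\<phi> y\<bar> \<le> M"
  proof (intro exI allI impI)
    fix y assume "vabs y \<le> a"
    then show "\<bar>\<phi> y\<bar> \<le> \<phi> a" using posf_abs[OF l p, of y] posf_mono[OF l p \<open>vabs y \<le> a\<close>] by simp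
  qed
qed

lemma dtz_glb: "down_to_zero D \<Longrightarrow> is_glb D 0"
  unfolding down_to_zero_def by simp

lemma dtz_nonneg: "down_to_zero D \<Longrightarrow> d \<in> D \<Longrightarrow> 0 \<le> d"
proof -
  assume a: "down_to_zero D" "d \<in> D"
  have "is_glb D 0" using a(1) by (rule dtz_glb)
  then have "\<forall>a\<in>D. 0 \<le> a" unfolding is_glb_def by (rule conjunct1)
  then show ?thesis using \<open>d \<in> D\<close> by (rule bspec)
qed

lemma dtz_lower: "down_to_zero D \<Longrightarrow> (\<And>d. d \<in> D \<Longrightarrow> l \<le> d) \<Longrightarrow> l \<le> 0"
proof -
  assume "down_to_zero D" "\<And>d. d \<in> D \<Longrightarrow> l \<le> d"
  then have "is_glb D 0" "\<forall>d\<in>D. l \<le> d" by (auto intro: dtz_glb)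
  then show ?thesis unfolding is_glb_def by (metis (no_types))
qed

lemma dtz_dir: "down_to_zero D \<Longrightarrow> a \<in> D \<Longrightarrow> b \<in> D \<Longrightarrow> \<exists>c\<in>D. c \<le> a \<and> c \<le> b"
proof -
  assume h: "down_to_zero D" "a \<in> D" "b \<in> D"
  have "\<forall>a\<in>D. \<forall>b\<in>D. \<exists>c\<in>D. c \<le> a \<and> c \<le> b"
    using h(1) unfolding down_to_zero_def by (elim conjE)
  then show ?thesis using h(2,3) by blast
qed

lemma dtz_ne: "down_to_zero D \<Longrightarrow> \<exists>d. d \<in> D"
proof -
  assume h: "down_to_zero D"
  have "D \<noteq> {}" using h unfolding down_to_zero_def by (elim conjE)
  then show ?thesis by blast
qed

lemma dtzI:
  assumes "d0 \<in> D" and "\<And>a b. a \<in> D \<Longrightarrow> b \<in> D \<Longrightarrow> \<exists>c\<in>D. c \<le> a \<and> c \<le> b"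
    and "\<And>d. d \<in> D \<Longrightarrow> 0 \<le> d"
    and "\<And>l. (\<And>d. d \<in> D \<Longrightarrow> l \<le> d) \<Longrightarrow> l \<le> 0"
  shows "down_to_zero D"
proof -
  have 1: "D \<noteq> {}" using assms(1) by blast
  have 2: "\<forall>a\<in>D. \<forall>b\<in>D. \<exists>c\<in>D. c \<le> a \<and> c \<le> b" using assms(2) by blast
  have 3: "\<forall>a\<in>D. 0 \<le> a" using assms(3) by blast
  have 4: "\<forall>u. (\<forall>a\<in>D. u \<le> a) \<longrightarrow> u \<le> 0" using assms(4) by blast
  have "is_glb D 0" unfolding is_glb_def using 3 4 by (intro conjI)
  then show ?thesis unfolding down_to_zero_def using 1 2 by (intro conjI)
qed

lemma od_linear: "\<psi> \<in> order_dual \<Longrightarrow> linear \<psi>"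
  unfolding order_dual_def by blast

lemma od_bound: "\<psi> \<in> order_dual \<Longrightarrow> 0 \<le> a \<Longrightarrow> \<exists>M. \<forall>y. vabs y \<le> a \<longrightarrow> \<bar>\<psi> y\<bar> \<le> M"
  unfolding order_dual_def by blast

lemma od_neg: "\<psi> \<in> order_dual \<Longrightarrow> (\<lambda>x. - \<psi> x) \<in> order_dual"
proof -
  assume h: "\<psi> \<in> order_dual"
  have "linear (\<lambda>x. - \<psi> x)" using od_linear[OF h] by (simp add: linear_compose_neg)
  moreover have "\<forall>a. 0 \<le> a \<longrightarrow> (\<exists>M. \<forall>y. vabs y \<le> a \<longrightarrow> \<bar>- \<psi> y\<bar> \<le> M)"
    using od_bound[OF h] by simp
  ultimately show ?thesis unfolding order_dual_def by blast
qed

lemma oc_od: "\<psi> \<in> oc_dual \<Longrightarrow> \<psi> \<in> order_dual"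
  unfolding oc_dual_def by blast

lemma oc_weak: "\<psi> \<in> oc_dual \<Longrightarrow> down_to_zero D \<Longrightarrow> 0 < \<epsilon> \<Longrightarrow> \<exists>d\<in>D. \<bar>\<psi> d\<bar> < \<epsilon>"
  unfolding oc_dual_def by blast

lemma oc_neg: "\<psi> \<in> oc_dual \<Longrightarrow> (\<lambda>x. - \<psi> x) \<in> oc_dual"
proof -
  assume h: "\<psi> \<in> oc_dual"
  have "(\<lambda>x. - \<psi> x) \<in> order_dual" using od_neg oc_od h by blast
  moreover have "\<forall>D. down_to_zero D \<longrightarrow> (\<forall>\<epsilon>>0. \<exists>d\<in>D. \<bar>- \<psi> d\<bar> < \<epsilon>)"
    using oc_weak[OF h] by simp
  ultimately show ?thesis unfolding oc_dual_def by blast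
qed

lemma od_bdd: "\<psi> \<in> order_dual \<Longrightarrow> 0 \<le> x \<Longrightarrow> bdd_above {\<psi> y | y. 0 \<le> y \<and> y \<le> x}"
proof -
  assume h: "\<psi> \<in> order_dual" "0 \<le> x"
  obtain M where M: "\<And>y. vabs y \<le> x \<Longrightarrow> \<bar>\<psi> y\<bar> \<le> M" using od_bound[OF h] by blast
  show ?thesis
  proof (rule bdd_aboveI)
    fix z assume "z \<in> {\<psi> y | y. 0 \<le> y \<and> y \<le> x}"
    then obtain y where "z = \<psi> y" "0 \<le> y" "y \<le> x" by blast
    then show "z \<le> M" using M[of y] vabs_nonneg[of y] by simp
  qed
qed

lemma od_bdd_fabs: "\<psi> \<in> order_dual \<Longrightarrow> 0 \<le> x \<Longrightarrow> bdd_above {\<psi> y | y. vabs y \<le> x}"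
proof -
  assume h: "\<psi> \<in> order_dual" "0 \<le> x"
  obtain M where M: "\<And>y. vabs y \<le> x \<Longrightarrow> \<bar>\<psi> y\<bar> \<le> M" using od_bound[OF h] by blast
  show ?thesis
  proof (rule bdd_aboveI)
    fix z assume "z \<in> {\<psi> y | y. vabs y \<le> x}"
    then obtain y where "z = \<psi> y" "vabs y \<le> x" by blast
    then show "z \<le> M" using M[of y] by simp
  qed
qed

lemma fabs_upper: "\<psi> \<in> order_dual \<Longrightarrow> vabs y \<le> x \<Longrightarrow> \<psi> y \<le> fabs \<psi> x"
  unfolding fabs_def
proof -
  assume h: "\<psi> \<in> order_dual" "vabs y \<le> x"
  have "0 \<le> x" using vabs_ge0[of y] h(2) by (rule order_trans)
  show "\<psi> y \<le> Sup {\<psi> y |y. vabs y \<le> x}"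
    using od_bdd_fabs[OF h(1) \<open>0 \<le> x\<close>] h(2) by (intro cSup_upper) auto
qed

definition pp :: "('a::vector_lattice \<Rightarrow> real) \<Rightarrow> 'a \<Rightarrow> real" where
  "pp \<psi> x = Sup {\<psi> y | y. 0 \<le> y \<and> y \<le> x}"

lemma pp_upper: "\<psi> \<in> order_dual \<Longrightarrow> 0 \<le> y \<Longrightarrow> y \<le> x \<Longrightarrow> \<psi> y \<le> pp \<psi> x"
  unfolding pp_def
proof -
  assume h: "\<psi> \<in> order_dual" "0 \<le> y" "y \<le> x"
  have "0 \<le> x" using h(2,3) by (rule order_trans)
  show "\<psi> y \<le> Sup {\<psi> y |y. 0 \<le> y \<and> y \<le> x}"
    using od_bdd[OF h(1) \<open>0 \<le> x\<close>] h(2,3) by (intro cSup_upper) auto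
qed

lemma pp_least: "0 \<le> x \<Longrightarrow> (\<And>y. 0 \<le> y \<Longrightarrow> y \<le> x \<Longrightarrow> \<psi> y \<le> c) \<Longrightarrow> pp \<psi> x \<le> c"
  unfolding pp_def
proof -
  assume h: "0 \<le> x" "\<And>y. 0 \<le> y \<Longrightarrow> y \<le> x \<Longrightarrow> \<psi> y \<le> c"
  have "{\<psi> y |y. 0 \<le> y \<and> y \<le> x} \<noteq> {}" using h(1) by blast
  then show "Sup {\<psi> y |y. 0 \<le> y \<and> y \<le> x} \<le> c"
    using h(2) by (intro cSup_least) auto
qed

lemma pp_nonneg: "\<psi> \<in> order_dual \<Longrightarrow> 0 \<le> x \<Longrightarrow> 0 \<le> pp \<psi> x"
  using pp_upper[of \<psi> 0 x] linear_0[OF od_linear] by force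

lemma pp_ge: "\<psi> \<in> order_dual \<Longrightarrow> 0 \<le> x \<Longrightarrow> \<psi> x \<le> pp \<psi> x"
  using pp_upper[of \<psi> x x] by simp

lemma pp_mono: "\<psi> \<in> order_dual \<Longrightarrow> 0 \<le> x \<Longrightarrow> x \<le> x' \<Longrightarrow> pp \<psi> x \<le> pp \<psi> x'"
  by (rule pp_least) (auto intro: pp_upper order_trans)

lemma pp_add: "\<psi> \<in> order_dual \<Longrightarrow> 0 \<le> a \<Longrightarrow> 0 \<le> b \<Longrightarrow> pp \<psi> (a + b) = pp \<psi> a + pp \<psi> b"
proof -
  assume h: "\<psi> \<in> order_dual" and a: "0 \<le> a" and b: "0 \<le> b"
  have l: "linear \<psi>" using od_linear[OF h] .
  have ab: "0 \<le> a + b" using a b by simp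
  have 1: "pp \<psi> (a + b) \<le> pp \<psi> a + pp \<psi> b"
  proof (rule pp_least[OF ab])
    fix y assume y: "0 \<le> y" "y \<le> a + b"
    have "\<psi> y = \<psi> (inf y a) + \<psi> (y - inf y a)" using linear_diff[OF l, of y "inf y a"] by linarith
    also have "\<psi> (inf y a) \<le> pp \<psi> a" using a y by (intro pp_upper[OF h]) auto
    also have "\<psi> (y - inf y a) \<le> pp \<psi> b"
    proof (rule pp_upper[OF h])
      show "0 \<le> y - inf y a" by (simp only: diff_ge_0_iff_ge) (rule inf_le1)
      show "y - inf y a \<le> b" by (rule riesz_decomp[OF y b])
    qed
    finally show "\<psi> y \<le> pp \<psi> a + pp \<psi> b" by simp
  qed
  have 2: "pp \<psi> a \<le> pp \<psi> (a + b) - pp \<psi> b"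
  proof (rule pp_least[OF a])
    fix y1 assume y1: "0 \<le> y1" "y1 \<le> a"
    have "pp \<psi> b \<le> pp \<psi> (a + b) - \<psi> y1"
    proof (rule pp_least[OF b])
      fix y2 assume y2: "0 \<le> y2" "y2 \<le> b"
      have "\<psi> (y1 + y2) \<le> pp \<psi> (a + b)" using y1 y2 by (intro pp_upper[OF h]) (auto intro: add_mono)
      then show "\<psi> y2 \<le> pp \<psi> (a + b) - \<psi> y1" using linear_add[OF l] by simp
    qed
    then show "\<psi> y1 \<le> pp \<psi> (a + b) - pp \<psi> b" by simp
  qed
  from 1 2 show ?thesis by simp
qed

lemma pp_scale: "\<psi> \<in> order_dual \<Longrightarrow> 0 \<le> c \<Longrightarrow> 0 \<le> x \<Longrightarrow> pp \<psi> (c *\<^sub>R x) = c * pp \<psi> x"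
proof -
  assume h: "\<psi> \<in> order_dual" and c: "0 \<le> c" and x: "0 \<le> x"
  have l: "linear \<psi>" using od_linear[OF h] .
  show ?thesis
  proof (cases "c = 0")
    case True
    have "pp \<psi> 0 \<le> 0" by (rule pp_least) (auto simp: linear_0[OF l] dest: antisym)
    moreover have "0 \<le> pp \<psi> 0" by (rule pp_nonneg[OF h]) simp
    ultimately show ?thesis using True by simp
  next
    case False
    then have cp: "0 < c" using c by simp
    have cx: "0 \<le> c *\<^sub>R x" using c x by (simp add: scaleR_nonneg_nonneg)
    have 1: "pp \<psi> (c *\<^sub>R x) \<le> c * pp \<psi> x"
    proof (rule pp_least[OF cx])
      fix y assume y: "0 \<le> y" "y \<le> c *\<^sub>R x"
      have "inverse c *\<^sub>R y \<le> inverse c *\<^sub>R (c *\<^sub>R x)" using y cp by (intro scaleR_left_mono) auto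
      then have "inverse c *\<^sub>R y \<le> x" using cp by simp
      moreover have "0 \<le> inverse c *\<^sub>R y" using y cp by (simp add: scaleR_nonneg_nonneg)
      ultimately have "\<psi> (inverse c *\<^sub>R y) \<le> pp \<psi> x" by (intro pp_upper[OF h])
      then have "inverse c * \<psi> y \<le> pp \<psi> x" using linear_scale[OF l] by simp
      then show "\<psi> y \<le> c * pp \<psi> x" using cp by (simp add: field_simps)
    qed
    have 2: "pp \<psi> x \<le> pp \<psi> (c *\<^sub>R x) / c"
    proof (rule pp_least[OF x])
      fix y assume y: "0 \<le> y" "y \<le> x"
      have "\<psi> (c *\<^sub>R y) \<le> pp \<psi> (c *\<^sub>R x)"
        using y c by (intro pp_upper[OF h]) (auto simp: scaleR_nonneg_nonneg scaleR_left_mono)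
      then show "\<psi> y \<le> pp \<psi> (c *\<^sub>R x) / c" using cp linear_scale[OF l] by (simp add: field_simps)
    qed
    from 1 2 cp show ?thesis by (simp add: field_simps)
  qed
qed

definition extf :: "('a::vector_lattice \<Rightarrow> real) \<Rightarrow> 'a \<Rightarrow> real" where
  "extf g x = g (sup x 0) - g (sup (- x) 0)"

lemma parts: "sup x 0 - sup (- x) 0 = (x::'a::vector_lattice)"
proof -
  have 1: "x + 0 = sup x 0 + inf x 0" by (rule add_eq_inf_sup)
  have 2: "inf x 0 = - sup (- x) 0" by (subst inf_eq_neg_sup) simp
  from 1 2 show ?thesis by (metis add.right_neutral diff_conv_add_uminus) 
qed

lemma sup0_nonneg: "0 \<le> sup (x::'a::vector_lattice) 0" by simp

lemma extf_diff:
  assumes add: "\<And>a b. 0 \<le> a \<Longrightarrow> 0 \<le> b \<Longrightarrow> g (a + b) = g a + g b"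
    and a: "0 \<le> (a::'a::vector_lattice)" and b: "0 \<le> b"
  shows "extf g (a - b) = g a - g b"
proof -
  define p where "p = sup (a - b) 0"
  define n where "n = sup (- (a - b)) 0"
  have "p - n = a - b" unfolding p_def n_def by (rule parts)
  then have "p + b = a + n" by (simp add: algebra_simps)
  then have "g (p + b) = g (a + n)" by simp
  moreover have "g (p + b) = g p + g b" using add[of p b] b unfolding p_def by simp
  moreover have "g (a + n) = g a + g n" using add[of a n] a unfolding n_def by simp
  ultimately show ?thesis unfolding extf_def p_def[symmetric] n_def[symmetric] by simp
qed

lemma extf_linear:
  assumes add: "\<And>a b. 0 \<le> a \<Longrightarrow> 0 \<le> b \<Longrightarrow> g (a + b) = g a + g b"
    and hom: "\<And>c a. 0 \<le> c \<Longrightarrow> 0 \<le> a \<Longrightarrow> g (c *\<^sub>R a) = c * g (a::'a::vector_lattice)"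
  shows "linear (extf g)"
proof (rule linearI)
  fix x y :: 'a
  define px where "px = sup x 0"
  define nx where "nx = sup (- x) 0"
  define py where "py = sup y 0"
  define ny where "ny = sup (- y) 0"
  have x: "x = px - nx" unfolding px_def nx_def by (rule parts[symmetric])
  have y: "y = py - ny" unfolding py_def ny_def by (rule parts[symmetric])
  have nn: "0 \<le> px" "0 \<le> nx" "0 \<le> py" "0 \<le> ny" unfolding px_def nx_def py_def ny_def by simp_all
  have "x + y = (px + py) - (nx + ny)" using x y by (simp add: algebra_simps)
  then have "extf g (x + y) = g (px + py) - g (nx + ny)"
    using extf_diff[OF add, of "px + py" "nx + ny"] nn by simp
  also have "\<dots> = (g px - g nx) + (g py - g ny)" using add nn by simp
  also have "g px - g nx = extf g x" unfolding extf_def px_def nx_def by simp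
  also have "g py - g ny = extf g y" unfolding extf_def py_def ny_def by simp
  finally show "extf g (x + y) = extf g x + extf g y" .
next
  fix c :: real and x :: 'a
  define px where "px = sup x 0"
  define nx where "nx = sup (- x) 0"
  have x: "x = px - nx" unfolding px_def nx_def by (rule parts[symmetric])
  have nn: "0 \<le> px" "0 \<le> nx" unfolding px_def nx_def by simp_all
  have ex: "extf g x = g px - g nx" unfolding extf_def px_def nx_def by simp
  show "extf g (c *\<^sub>R x) = c *\<^sub>R extf g x"
  proof (cases "0 \<le> c")
    case True
    have "c *\<^sub>R x = c *\<^sub>R (px - nx)" using x by (rule arg_cong)
    then have "c *\<^sub>R x = c *\<^sub>R px - c *\<^sub>R nx" by (simp only: scaleR_diff_right)
    then have "extf g (c *\<^sub>R x) = g (c *\<^sub>R px) - g (c *\<^sub>R nx)"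
      using extf_diff[OF add, of "c *\<^sub>R px" "c *\<^sub>R nx"] nn True by (simp add: scaleR_nonneg_nonneg)
    also have "\<dots> = c * (g px - g nx)" using hom[OF True] nn by (simp add: algebra_simps)
    finally show ?thesis using ex by simp
  next
    case False
    then have c: "0 \<le> - c" by simp
    have "c *\<^sub>R x = c *\<^sub>R (px - nx)" using x by (rule arg_cong)
    then have "c *\<^sub>R x = (- c) *\<^sub>R nx - (- c) *\<^sub>R px" by (simp add: algebra_simps)
    moreover have "0 \<le> (- c) *\<^sub>R nx" "0 \<le> (- c) *\<^sub>R px"
      using c nn by (simp_all only: scaleR_nonneg_nonneg)
    ultimately have "extf g (c *\<^sub>R x) = g ((- c) *\<^sub>R nx) - g ((- c) *\<^sub>R px)"
      using extf_diff[OF add] by metis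
    also have "\<dots> = c * (g px - g nx)" using hom[OF c] nn by (simp add: algebra_simps)
    finally show ?thesis using ex by simp
  qed
qed

lemma extf_pos:
  assumes add: "\<And>a b. 0 \<le> a \<Longrightarrow> 0 \<le> b \<Longrightarrow> g (a + b) = g a + g b"
    and x: "0 \<le> (x::'a::vector_lattice)"
  shows "extf g x = g x"
proof -
  have "g (0 + 0) = g 0 + g 0" using add[of 0 0] by simp
  then have "g 0 = 0" by simp
  then show ?thesis using extf_diff[OF add x, of 0] by simp
qed

lemma pp_approx:
  assumes h: "\<psi> \<in> order_dual" and x: "0 \<le> x" and d: "0 < \<delta>"
  shows "\<exists>y. 0 \<le> y \<and> y \<le> x \<and> pp \<psi> x - \<delta> < \<psi> y"
proof (rule ccontr)
  assume "\<not> ?thesis"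
  then have "\<And>y. 0 \<le> y \<Longrightarrow> y \<le> x \<Longrightarrow> \<psi> y \<le> pp \<psi> x - \<delta>" by force
  then have "pp \<psi> x \<le> pp \<psi> x - \<delta>" by (rule pp_least[OF x])
  then show False using d by simp
qed

lemma pp_oc:
  assumes h: "\<psi> \<in> oc_dual" and D: "down_to_zero D" and e: "0 < \<epsilon>"
  shows "\<exists>d\<in>D. pp \<psi> d < \<epsilon>"
proof (rule ccontr)
  assume "\<not> ?thesis"
  then have big: "\<And>d. d \<in> D \<Longrightarrow> \<epsilon> \<le> pp \<psi> d" by force
  have od: "\<psi> \<in> order_dual" using oc_od[OF h] .
  have l: "linear \<psi>" using od_linear[OF od] .
  define \<delta> where "\<delta> = \<epsilon> / 4"
  have dp: "0 < \<delta>" using e unfolding \<delta>_def by simp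
  obtain d0 where d0: "d0 \<in> D" using dtz_ne[OF D] by blast
  have d0p: "0 \<le> d0" using dtz_nonneg[OF D d0] .
  obtain y0 where y0: "0 \<le> y0" "y0 \<le> d0" "pp \<psi> d0 - \<delta> < \<psi> y0"
    using pp_approx[OF od d0p dp] by blast
  define D1 where "D1 = {inf y0 d | d. d \<in> D \<and> d \<le> d0}"
  have "down_to_zero D1"
  proof (rule dtzI)
    show "inf y0 d0 \<in> D1" unfolding D1_def using d0 by blast
  next
    fix a b assume "a \<in> D1" "b \<in> D1"
    then obtain da db where a: "a = inf y0 da" "da \<in> D" "da \<le> d0" and b: "b = inf y0 db" "db \<in> D" "db \<le> d0"
      unfolding D1_def by blast
    obtain c where c: "c \<in> D" "c \<le> da" "c \<le> db" using dtz_dir[OF D a(2) b(2)] by blast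
    have "inf y0 c \<in> D1" unfolding D1_def using c a(3) by (blast intro: order_trans)
    moreover have "inf y0 c \<le> a" "inf y0 c \<le> b" unfolding a b using c by (auto intro: le_infI2)
    ultimately show "\<exists>c\<in>D1. c \<le> a \<and> c \<le> b" by blast
  next
    fix e assume "e \<in> D1"
    then obtain d where "e = inf y0 d" "d \<in> D" unfolding D1_def by blast
    then show "0 \<le> e" using y0(1) dtz_nonneg[OF D] by simp
  next
    fix l assume lb: "\<And>e. e \<in> D1 \<Longrightarrow> l \<le> e"
    show "l \<le> 0"
    proof (rule dtz_lower[OF D])
      fix d assume d: "d \<in> D"
      obtain c where c: "c \<in> D" "c \<le> d" "c \<le> d0" using dtz_dir[OF D d d0] by blast
      have "inf y0 c \<in> D1" unfolding D1_def using c by blast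
      then have "l \<le> inf y0 c" by (rule lb)
      also have "\<dots> \<le> d" using c(2) by (auto intro: le_infI2)
      finally show "l \<le> d" .
    qed
  qed
  from oc_weak[OF h this dp] obtain e where e1: "e \<in> D1" "\<bar>\<psi> e\<bar> < \<delta>" by blast
  then obtain d1 where d1: "e = inf y0 d1" "d1 \<in> D" "d1 \<le> d0" unfolding D1_def by blast
  have d1p: "0 \<le> d1" using dtz_nonneg[OF D d1(2)] .
  obtain w where w: "0 \<le> w" "w \<le> d1" "pp \<psi> d1 - \<delta> < \<psi> w"
    using pp_approx[OF od d1p dp] by blast
  define y' where "y' = (y0 - inf y0 d1) + w"
  have r: "y0 - inf y0 d1 \<le> d0 - d1"
    using riesz_decomp[of y0 d1 "d0 - d1"] y0 d1 by simp
  have "0 \<le> y0 - inf y0 d1" by (simp only: diff_ge_0_iff_ge) (rule inf_le1)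
  then have y'p: "0 \<le> y'" unfolding y'_def using w(1) by simp
  have "y' \<le> (d0 - d1) + d1" unfolding y'_def using r w(2) by (rule add_mono)
  then have y'd: "y' \<le> d0" by simp
  have "\<psi> y' \<le> pp \<psi> d0" using pp_upper[OF od y'p y'd] .
  moreover have "\<psi> y' = \<psi> y0 - \<psi> e + \<psi> w"
    unfolding y'_def d1(1) using linear_add[OF l, of "y0 - inf y0 d1" w] linear_diff[OF l, of y0 "inf y0 d1"]
    by linarith
  moreover have "\<epsilon> \<le> pp \<psi> d1" using big[OF d1(2)] .
  ultimately show False using y0(3) w(3) e1(2) unfolding \<delta>_def by linarith
qed

lemma modulus:
  assumes h: "\<psi> \<in> oc_dual"
  shows "\<exists>\<phi>. \<phi> \<in> oc_dual \<and> linear \<phi> \<and> posf \<phi> \<and> (\<forall>x. 0 \<le> x \<longrightarrow> \<bar>\<psi> x\<bar> \<le> \<phi> x)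
           \<and> (\<forall>x. 0 \<le> x \<longrightarrow> fabs \<phi> x \<le> fabs \<psi> x)"
proof -
  define \<psi>' where "\<psi>' = (\<lambda>x. - \<psi> x)"
  have h': "\<psi>' \<in> oc_dual" unfolding \<psi>'_def using oc_neg[OF h] .
  have od: "\<psi> \<in> order_dual" "\<psi>' \<in> order_dual" using oc_od h h' by auto
  define g where "g x = pp \<psi> x + pp \<psi>' x" for x
  have add: "g (a + b) = g a + g b" if "0 \<le> a" "0 \<le> b" for a b
    unfolding g_def using pp_add[OF od(1) that] pp_add[OF od(2) that] by simp
  have hom: "g (c *\<^sub>R a) = c * g a" if "0 \<le> c" "0 \<le> a" for c a
    unfolding g_def using pp_scale[OF od(1) that] pp_scale[OF od(2) that] by (simp add: algebra_simps)
  define \<phi> where "\<phi> = extf g"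
  have lin: "linear \<phi>" unfolding \<phi>_def by (rule extf_linear[OF add hom])
  have phig: "\<phi> x = g x" if "0 \<le> x" for x unfolding \<phi>_def by (rule extf_pos[OF add that])
  have gnn: "0 \<le> g x" if "0 \<le> x" for x unfolding g_def using pp_nonneg[OF od(1) that] pp_nonneg[OF od(2) that] by simp
  have pos: "posf \<phi>" unfolding posf_def using phig gnn by simp
  have dom: "\<bar>\<psi> x\<bar> \<le> \<phi> x" if "0 \<le> x" for x
    using pp_ge[OF od(1) that] pp_ge[OF od(2) that] pp_nonneg[OF od(1) that] pp_nonneg[OF od(2) that] phig[OF that]
    unfolding g_def \<psi>'_def by linarith
  have fab: "fabs \<phi> x \<le> fabs \<psi> x" if x: "0 \<le> x" for x
  proof -
    have "pp \<psi> x \<le> fabs \<psi> x - pp \<psi>' x"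
    proof (rule pp_least[OF x])
      fix y1 assume y1: "0 \<le> y1" "y1 \<le> x"
      have "pp \<psi>' x \<le> fabs \<psi> x - \<psi> y1"
      proof (rule pp_least[OF x])
        fix y2 assume y2: "0 \<le> y2" "y2 \<le> x"
        have "vabs (y1 - y2) \<le> x" unfolding vabs_le_iff
        proof
          have "y1 - y2 \<le> y1" using y2(1) by simp
          then show "y1 - y2 \<le> x" using y1(2) by (rule order_trans)
          have "- (y1 - y2) \<le> y2" using y1(1) by simp
          then show "- (y1 - y2) \<le> x" using y2(2) by (rule order_trans)
        qed
        then have "\<psi> (y1 - y2) \<le> fabs \<psi> x" by (rule fabs_upper[OF od(1)])
        then show "\<psi>' y2 \<le> fabs \<psi> x - \<psi> y1"
          unfolding \<psi>'_def using linear_diff[OF od_linear[OF od(1)]] by simp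
      qed
      then show "\<psi> y1 \<le> fabs \<psi> x - pp \<psi>' x" by simp
    qed
    then have "g x \<le> fabs \<psi> x" unfolding g_def by simp
    then show ?thesis using fabs_posf[OF lin pos x] phig[OF x] by simp
  qed
  have "\<phi> \<in> oc_dual"
    unfolding oc_dual_def
  proof (intro CollectI conjI allI impI ballI)
    show "\<phi> \<in> order_dual" by (rule posf_order_dual[OF lin pos])
  next
    fix D :: "'a set" and \<epsilon> :: real assume D: "down_to_zero D" and e: "0 < \<epsilon>"
    obtain d1 where d1: "d1 \<in> D" "pp \<psi> d1 < \<epsilon> / 2" using pp_oc[OF h D, of "\<epsilon> / 2"] e by auto
    obtain d2 where d2: "d2 \<in> D" "pp \<psi>' d2 < \<epsilon> / 2" using pp_oc[OF h' D, of "\<epsilon> / 2"] e by auto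
    obtain c where c: "c \<in> D" "c \<le> d1" "c \<le> d2" using dtz_dir[OF D d1(1) d2(1)] by blast
    have cp: "0 \<le> c" using dtz_nonneg[OF D c(1)] .
    have "pp \<psi> c \<le> pp \<psi> d1" using pp_mono[OF od(1) cp c(2)] .
    moreover have "pp \<psi>' c \<le> pp \<psi>' d2" using pp_mono[OF od(2) cp c(3)] .
    ultimately have "g c < \<epsilon>" unfolding g_def using d1(2) d2(2) by simp
    then have "\<bar>\<phi> c\<bar> < \<epsilon>" using phig[OF cp] gnn[OF cp] by simp
    then show "\<exists>d\<in>D. \<bar>\<phi> d\<bar> < \<epsilon>" using c(1) by blast
  qed
  then show ?thesis using lin pos dom fab by blast
qed

lemma ideal_sub: "ideal_of_oc_dual I \<Longrightarrow> \<phi> \<in> I \<Longrightarrow> \<phi> \<in> oc_dual"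
  unfolding ideal_of_oc_dual_def by blast

lemma ideal_zero: "ideal_of_oc_dual I \<Longrightarrow> (\<lambda>_. 0) \<in> I"
  unfolding ideal_of_oc_dual_def by blast

lemma ideal_add: "ideal_of_oc_dual I \<Longrightarrow> \<phi> \<in> I \<Longrightarrow> \<psi> \<in> I \<Longrightarrow> (\<lambda>x. \<phi> x + \<psi> x) \<in> I"
  unfolding ideal_of_oc_dual_def by blast

lemma ideal_solid: "ideal_of_oc_dual I \<Longrightarrow> \<psi> \<in> I \<Longrightarrow> \<phi> \<in> oc_dual \<Longrightarrow>
    (\<And>x. 0 \<le> x \<Longrightarrow> fabs \<phi> x \<le> fabs \<psi> x) \<Longrightarrow> \<phi> \<in> I"
  unfolding ideal_of_oc_dual_def by blast

lemma ideal_linear: "ideal_of_oc_dual I \<Longrightarrow> \<phi> \<in> I \<Longrightarrow> linear \<phi>"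
  using ideal_sub oc_od od_linear by blast

lemma ideal_mod:
  assumes I: "ideal_of_oc_dual I" and psi: "\<psi> \<in> I"
  shows "\<exists>\<phi>\<in>I. linear \<phi> \<and> posf \<phi> \<and> (\<forall>x. 0 \<le> x \<longrightarrow> \<bar>\<psi> x\<bar> \<le> \<phi> x)"
proof -
  obtain \<phi> where \<phi>: "\<phi> \<in> oc_dual" "linear \<phi>" "posf \<phi>" "\<forall>x. 0 \<le> x \<longrightarrow> \<bar>\<psi> x\<bar> \<le> \<phi> x"
    "\<forall>x. 0 \<le> x \<longrightarrow> fabs \<phi> x \<le> fabs \<psi> x"
    using modulus[OF ideal_sub[OF I psi]] by blast
  have "\<phi> \<in> I" using ideal_solid[OF I psi \<phi>(1)] \<phi>(5) by blast
  then show ?thesis using \<phi> by blast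
qed

lemma approx:
  assumes I: "ideal_of_oc_dual I" and S: "convex S" and x: "x \<in> weak_closure I S"
    and phi: "\<phi> \<in> I" "posf \<phi>" and e: "0 < \<epsilon>"
  shows "\<exists>s\<in>S. \<phi> (vabs (s - x)) < \<epsilon>"
proof (rule ccontr)
  assume "\<not> ?thesis"
  then have big: "\<And>s. s \<in> S \<Longrightarrow> \<epsilon> \<le> \<phi> (vabs (s - x))" by force
  have l: "linear \<phi>" using ideal_linear[OF I phi(1)] .
  have xw: "\<forall>F. finite F \<and> F \<subseteq> I \<longrightarrow> (\<forall>\<epsilon>>0. \<exists>s\<in>S. \<forall>\<phi>\<in>F. \<bar>\<phi> s - \<phi> x\<bar> < \<epsilon>)"
    using x unfolding weak_closure_def by blast
  have "S \<noteq> {}" using xw[rule_format, of "{}" 1] by auto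
  define A where "A = (\<lambda>s. s - x) ` S"
  have A: "convex A" "A \<noteq> {}" unfolding A_def using convex_translation_subtract[OF S] \<open>S \<noteq> {}\<close> by auto
  have lbA: "\<epsilon> \<le> \<phi> (vabs a)" if "a \<in> A" for a using that big unfolding A_def by auto
  obtain f where f: "linear f" "\<And>y. f y \<le> \<phi> (vabs y)" "\<And>a. a \<in> A \<Longrightarrow> \<epsilon> \<le> f a"
    using mazur_orlicz[OF posf_sublin[OF l phi(2)] A lbA] by blast
  have fabs_dom: "\<bar>f y\<bar> \<le> \<phi> (vabs y)" for y
  proof -
    have "f (- y) \<le> \<phi> (vabs (- y))" by (rule f(2))
    then have "- f y \<le> \<phi> (vabs y)" using linear_neg[OF f(1), of y] by (simp only: vabs_minus)
    then show ?thesis using f(2)[of y] by simp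
  qed
  have "f \<in> oc_dual"
    unfolding oc_dual_def
  proof (intro CollectI conjI allI impI ballI)
    show "f \<in> order_dual" unfolding order_dual_def
    proof (intro CollectI conjI allI impI)
      show "linear f" by (rule f(1))
      fix a :: 'a assume "0 \<le> a"
      show "\<exists>M. \<forall>y. vabs y \<le> a \<longrightarrow> \<bar>f y\<bar> \<le> M"
      proof (intro exI allI impI)
        fix y assume "vabs y \<le> a"
        then show "\<bar>f y\<bar> \<le> \<phi> a" using fabs_dom[of y] posf_mono[OF l phi(2) \<open>vabs y \<le> a\<close>] by simp
      qed
    qed
  next
    fix D :: "'a set" and e' :: real assume D: "down_to_zero D" and e': "0 < e'"
    obtain d where d: "d \<in> D" "\<bar>\<phi> d\<bar> < e'" using oc_weak[OF ideal_sub[OF I phi(1)] D e'] by blast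
    have "\<bar>f d\<bar> \<le> \<phi> d" using fabs_dom[of d] vabs_nonneg[OF dtz_nonneg[OF D d(1)]] by simp
    then show "\<exists>d\<in>D. \<bar>f d\<bar> < e'" using d by force
  qed
  moreover have "fabs f y \<le> fabs \<phi> y" if "0 \<le> y" for y
    using fabs_le_posf[OF l phi(2) fabs_dom that] fabs_posf[OF l phi(2) that] by simp
  ultimately have "f \<in> I" using ideal_solid[OF I phi(1)] by blast
  then obtain s where s: "s \<in> S" "\<bar>f s - f x\<bar> < \<epsilon>" using xw[rule_format, of "{f}" \<epsilon>] e by auto
  have "\<epsilon> \<le> f (s - x)" using f(3) s(1) unfolding A_def by blast
  then show False using s(2) linear_diff[OF f(1)] by simp
qed

lemma sup_le_add_nonneg: "0 \<le> (a::'a::vector_lattice) \<Longrightarrow> 0 \<le> b \<Longrightarrow> sup a b \<le> a + b"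
proof -
  assume a: "0 \<le> a" and b: "0 \<le> b"
  have "a \<le> a + b" using b by simp
  moreover have "b \<le> a + b" using a by simp
  ultimately show ?thesis by (rule sup_least)
qed

lemma band_closed:
  assumes oc: "\<phi> \<in> oc_dual" and l: "linear \<phi>" and p: "posf \<phi>" and r: "0 \<le> r"
    and dd: "\<And>g. 0 \<le> g \<Longrightarrow> (\<forall>b. 0 \<le> b \<longrightarrow> \<phi> b = 0 \<longrightarrow> inf g b = 0) \<Longrightarrow> inf r g = 0"
  shows "\<phi> r = 0"
proof -
  define G where "G = {h. 0 \<le> h \<and> h \<le> r \<and> \<phi> h = 0}"
  have lub: "r \<le> u" if ub: "\<And>h. h \<in> G \<Longrightarrow> h \<le> u" for u
  proof -
    define u' where "u' = inf u r"
    define t where "t = r - u'"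
    have tp: "0 \<le> t" unfolding t_def u'_def by (simp only: diff_ge_0_iff_ge) (rule inf_le2)
    have tr: "t \<le> r"
    proof -
      have "0 \<in> G" unfolding G_def using r linear_0[OF l] by simp
      then have "0 \<le> u" by (rule ub)
      then have "0 \<le> u'" unfolding u'_def using r by simp
      then show ?thesis unfolding t_def by simp
    qed
    have "t = 0"
    proof (rule ccontr)
      assume tn: "t \<noteq> 0"
      have "\<exists>b. 0 \<le> b \<and> \<phi> b = 0 \<and> inf t b \<noteq> 0"
      proof (rule ccontr)
        assume "\<not> ?thesis"
        then have "\<forall>b. 0 \<le> b \<longrightarrow> \<phi> b = 0 \<longrightarrow> inf t b = 0" by blast
        then have "inf r t = 0" by (rule dd[OF tp])
        moreover have "inf r t = t" using tr by (simp add: inf_absorb2)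
        ultimately show False using tn by simp
      qed
      then obtain b where b: "0 \<le> b" "\<phi> b = 0" "inf t b \<noteq> 0" by blast
      define h where "h = inf t b"
      have hp: "0 \<le> h" unfolding h_def using tp b(1) by simp
      have ht: "h \<le> t" unfolding h_def by simp
      have ph: "\<phi> h = 0"
      proof -
        have "\<phi> h \<le> \<phi> b" unfolding h_def by (rule posf_mono[OF l p]) simp
        moreover have "0 \<le> \<phi> h" using p hp unfolding posf_def by blast
        ultimately show ?thesis using b(2) by simp
      qed
      have "of_nat k *\<^sub>R h \<le> r" for k
      proof (induction k)
        case 0 then show ?case using r by simp
      next
        case (Suc k)
        have "0 \<le> of_nat k *\<^sub>R h" using hp by (simp add: scaleR_nonneg_nonneg)
        moreover have "\<phi> (of_nat k *\<^sub>R h) = 0" using linear_scale[OF l] ph by simp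
        ultimately have "of_nat k *\<^sub>R h \<in> G" unfolding G_def using Suc.IH by simp
        then have "of_nat k *\<^sub>R h \<le> u" by (rule ub)
        then have "of_nat k *\<^sub>R h \<le> u'" unfolding u'_def using Suc.IH by simp
        also have "u' = r - t" unfolding t_def by simp
        also have "\<dots> \<le> r - h" using ht by simp
        finally have "of_nat k *\<^sub>R h + h \<le> r" by (simp add: le_diff_eq)
        then show ?case by (simp add: algebra_simps)
      qed
      then have "h = 0" by (rule archim0[OF hp])
      then show False using b(3) unfolding h_def by simp
    qed
    then have "r = u'" unfolding t_def by simp
    then show ?thesis unfolding u'_def by (metis inf.cobounded1)
  qed
  define D where "D = {r - h | h. h \<in> G}"
  have D: "down_to_zero D"
  proof (rule dtzI)
    have "0 \<in> G" unfolding G_def using r linear_0[OF l] by simp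
    then show "r - 0 \<in> D" unfolding D_def by blast
  next
    fix a b assume "a \<in> D" "b \<in> D"
    then obtain ha hb where a: "a = r - ha" "ha \<in> G" and b: "b = r - hb" "hb \<in> G"
      unfolding D_def by blast
    have "sup ha hb \<in> G"
    proof -
      have nn: "0 \<le> ha" "0 \<le> hb" "ha \<le> r" "hb \<le> r" "\<phi> ha = 0" "\<phi> hb = 0"
        using a(2) b(2) unfolding G_def by auto
      have "\<phi> (sup ha hb) \<le> \<phi> (ha + hb)" by (rule posf_mono[OF l p sup_le_add_nonneg[OF nn(1,2)]])
      moreover have "\<phi> (ha + hb) = 0" using linear_add[OF l] nn by simp
      moreover have "0 \<le> \<phi> (sup ha hb)" using p nn unfolding posf_def by (simp add: le_supI1)
      ultimately have "\<phi> (sup ha hb) = 0" by simp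
      then show ?thesis unfolding G_def using nn by (simp add: le_supI1)
    qed
    then have "r - sup ha hb \<in> D" unfolding D_def by blast
    moreover have "r - sup ha hb \<le> a" "r - sup ha hb \<le> b" unfolding a b
      by (simp_all add: diff_le_eq)
    ultimately show "\<exists>c\<in>D. c \<le> a \<and> c \<le> b" by blast
  next
    fix d assume "d \<in> D"
    then show "0 \<le> d" unfolding D_def G_def by auto
  next
    fix l' assume lb: "\<And>d. d \<in> D \<Longrightarrow> l' \<le> d"
    have "r \<le> r - l'"
    proof (rule lub)
      fix h assume "h \<in> G"
      then have "l' \<le> r - h" using lb unfolding D_def by blast
      then show "h \<le> r - l'" by (simp add: le_diff_eq algebra_simps)
    qed
    then show "l' \<le> 0" by simp
  qed
  have "\<phi> r \<le> \<epsilon>" if e: "0 < \<epsilon>" for \<epsilon>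
  proof -
    obtain d where d: "d \<in> D" "\<bar>\<phi> d\<bar> < \<epsilon>" using oc_weak[OF oc D e] by blast
    then obtain h where h: "d = r - h" "h \<in> G" unfolding D_def by blast
    have "\<phi> d = \<phi> r - \<phi> h" unfolding h(1) by (rule linear_diff[OF l])
    moreover have "\<phi> h = 0" using h(2) unfolding G_def by simp
    ultimately show ?thesis using d(2) by simp
  qed
  then have "\<phi> r \<le> 0" by (meson dense not_le)
  moreover have "0 \<le> \<phi> r" using p r unfolding posf_def by blast
  ultimately show ?thesis by simp
qed

lemma carrier_piece:
  assumes I: "ideal_of_oc_dual I" and sep: "separates_points I" and r: "0 \<le> r" "r \<noteq> 0"
  shows "\<exists>y \<phi>. 0 \<le> y \<and> y \<le> r \<and> y \<noteq> 0 \<and> \<phi> \<in> I \<and> posf \<phi> \<and> (\<forall>b. 0 \<le> b \<longrightarrow> \<phi> b = 0 \<longrightarrow> inf b y = 0)"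
proof -
  obtain \<psi> where psi: "\<psi> \<in> I" "\<psi> r \<noteq> 0" using sep r(2) unfolding separates_points_def by blast
  obtain \<phi> where phi: "\<phi> \<in> I" "linear \<phi>" "posf \<phi>" "\<forall>x. 0 \<le> x \<longrightarrow> \<bar>\<psi> x\<bar> \<le> \<phi> x"
    using ideal_mod[OF I psi(1)] by blast
  have "\<phi> r \<noteq> 0" using phi(4) r(1) psi(2) by force
  then obtain g where g: "0 \<le> g" "\<forall>b. 0 \<le> b \<longrightarrow> \<phi> b = 0 \<longrightarrow> inf g b = 0" "inf r g \<noteq> 0"
    using band_closed[OF ideal_sub[OF I phi(1)] phi(2) phi(3) r(1)] by blast
  define y where "y = inf r g"
  have "\<forall>b. 0 \<le> b \<longrightarrow> \<phi> b = 0 \<longrightarrow> inf b y = 0"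
  proof (intro allI impI)
    fix b assume b: "0 \<le> b" "\<phi> b = 0"
    have "inf b y \<le> inf g b" unfolding y_def by (simp add: le_infI2 inf.coboundedI2)
    also have "\<dots> = 0" using g(2) b by blast
    finally show "inf b y = 0" using b(1) r(1) g(1) unfolding y_def by (simp add: antisym)
  qed
  moreover have "0 \<le> y" "y \<le> r" "y \<noteq> 0" unfolding y_def using r(1) g(1) g(3) by auto
  ultimately show ?thesis using phi by blast
qed

lemma posf_zero: "posf (\<lambda>_. 0)" unfolding posf_def by simp

lemma cover:
  assumes I: "ideal_of_oc_dual I" and sep: "separates_points I"
    and csp: "countable_sup_property TYPE('a)" and a: "0 \<le> (a::'a::vector_lattice)"
  shows "\<exists>\<Phi>::nat \<Rightarrow> 'a \<Rightarrow> real. (\<forall>j. \<Phi> j \<in> I \<and> posf (\<Phi> j)) \<and>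
           (\<forall>v. 0 \<le> v \<longrightarrow> (\<forall>j. \<Phi> j v = 0) \<longrightarrow> inf v a = 0)"
proof -
  define P where "P y \<longleftrightarrow> (\<exists>\<phi>. \<phi> \<in> I \<and> posf \<phi> \<and> (\<forall>b. 0 \<le> b \<longrightarrow> \<phi> b = 0 \<longrightarrow> inf b y = 0))" for y
  define A where "A = {y. 0 \<le> y \<and> y \<le> a \<and> P y}"
  have zA: "0 \<in> A" unfolding A_def P_def using a ideal_zero[OF I] posf_zero by (auto simp: inf_absorb2)
  have "is_lub A a"
    unfolding is_lub_def
  proof (intro conjI allI impI ballI)
    fix y assume "y \<in> A" then show "y \<le> a" unfolding A_def by simp
  next
    fix u assume ub: "\<forall>y\<in>A. y \<le> u"
    define u' where "u' = inf u a"
    define r where "r = a - u'"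
    have u'p: "0 \<le> u'" unfolding u'_def using ub zA a by simp
    have rp: "0 \<le> r" unfolding r_def u'_def by (simp only: diff_ge_0_iff_ge) (rule inf_le2)
    have ra: "r \<le> a" unfolding r_def using u'p by simp
    have "r = 0"
    proof (rule ccontr)
      assume rn: "r \<noteq> 0"
      obtain y \<phi> where y: "0 \<le> y" "y \<le> r" "y \<noteq> 0" "\<phi> \<in> I" "posf \<phi>"
          "\<forall>b. 0 \<le> b \<longrightarrow> \<phi> b = 0 \<longrightarrow> inf b y = 0"
        using carrier_piece[OF I sep rp rn] by blast
      have "of_nat k *\<^sub>R y \<le> a" for k
      proof (induction k)
        case 0 then show ?case using a by simp
      next
        case (Suc k)
        have kp: "0 \<le> of_nat k *\<^sub>R y" using y(1) by (simp add: scaleR_nonneg_nonneg)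
        have "P (of_nat k *\<^sub>R y)" unfolding P_def
        proof (intro exI conjI allI impI)
          show "\<phi> \<in> I" "posf \<phi>" using y by auto
          fix b assume "0 \<le> b" "\<phi> b = 0"
          then show "inf b (of_nat k *\<^sub>R y) = 0" using disj_scale_nat[of b y k] y by simp
        qed
        then have "of_nat k *\<^sub>R y \<in> A" unfolding A_def using kp Suc.IH by simp
        then have "of_nat k *\<^sub>R y \<le> u" using ub by blast
        then have "of_nat k *\<^sub>R y \<le> u'" unfolding u'_def using Suc.IH by simp
        also have "u' = a - r" unfolding r_def by simp
        also have "\<dots> \<le> a - y" using y(2) by simp
        finally have "of_nat k *\<^sub>R y + y \<le> a" by (simp add: le_diff_eq)
        then show ?case by (simp add: algebra_simps)
      qed
      then have "y = 0" by (rule archim0[OF y(1)])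
      then show False using y(3) by simp
    qed
    then have "a = u'" unfolding r_def by simp
    then show "a \<le> u" unfolding u'_def by (metis inf.cobounded1)
  qed
  then obtain B where B: "B \<subseteq> A" "countable B" "is_lub B a"
    using csp unfolding countable_sup_property_def by blast
  show ?thesis
  proof (cases "B = {}")
    case True
    have "a \<le> 0" using B(3) True unfolding is_lub_def by blast
    then have a0: "a = 0" using a by simp
    show ?thesis
      by (rule exI[where x = "\<lambda>_. \<lambda>_. 0"]) (auto simp: ideal_zero[OF I] posf_zero a0 inf_absorb2)
  next
    case False
    have "\<forall>b\<in>B. \<exists>\<phi>. \<phi> \<in> I \<and> posf \<phi> \<and> (\<forall>c. 0 \<le> c \<longrightarrow> \<phi> c = 0 \<longrightarrow> inf c b = 0)"
      using B(1) unfolding A_def P_def by blast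
    then obtain ch where ch: "\<And>b. b \<in> B \<Longrightarrow> ch b \<in> I \<and> posf (ch b) \<and> (\<forall>c. 0 \<le> c \<longrightarrow> ch b c = 0 \<longrightarrow> inf c b = 0)"
      by metis
    define \<Phi> where "\<Phi> j = ch (from_nat_into B j)" for j
    have 1: "\<forall>j. \<Phi> j \<in> I \<and> posf (\<Phi> j)" unfolding \<Phi>_def using ch from_nat_into[OF False] by blast
    have 2: "inf v a = 0" if v: "0 \<le> v" "\<forall>j. \<Phi> j v = 0" for v
    proof -
      have vb: "inf v b = 0" if b: "b \<in> B" for b
      proof -
        obtain n where n: "from_nat_into B n = b" using from_nat_into_surj[OF B(2) b] by blast
        have "ch b v = 0" using v(2) n unfolding \<Phi>_def by blast
        then have "inf v b = 0" using ch[OF b] v(1) by blast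
        then show ?thesis .
      qed
      define c where "c = inf v a"
      have cp: "0 \<le> c" unfolding c_def using v(1) a by simp
      have "a \<le> a - c"
      proof -
        have "\<forall>b\<in>B. b \<le> a - c"
        proof
          fix b assume b: "b \<in> B"
          have bA: "0 \<le> b" "b \<le> a" using B(1) b unfolding A_def by auto
          have "inf b c \<le> inf v b" unfolding c_def by (simp add: le_infI2 inf.coboundedI2)
          then have "inf b c \<le> 0" using vb[OF b] by simp
          moreover have "0 \<le> inf b c" using bA cp by simp
          ultimately have "inf b c = 0" by simp
          then have "b + c = sup b c" by (rule disj_add_eq_sup)
          also have "\<dots> \<le> a" using bA(2) unfolding c_def by simp
          finally show "b \<le> a - c" by (simp add: le_diff_eq)
        qed
        then show ?thesis using B(3) unfolding is_lub_def by blast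
      qed
      then have "c \<le> 0" by simp
      then show ?thesis using cp unfolding c_def by simp
    qed
    show ?thesis using 1 2 by blast
  qed
qed

lemma shift_zero:
  assumes nn: "\<And>d. d \<in> D \<Longrightarrow> 0 \<le> d" and w: "w \<in> D" and h: "0 \<le> (h::'a::vector_lattice)"
    and sh: "\<And>d. d \<in> D \<Longrightarrow> d - h \<in> D"
  shows "h = 0"
proof -
  have "w - of_nat k *\<^sub>R h \<in> D" for k
  proof (induction k)
    case 0 then show ?case using w by simp
  next
    case (Suc k)
    then have "(w - of_nat k *\<^sub>R h) - h \<in> D" by (rule sh)
    then show ?case by (simp add: algebra_simps)
  qed
  then have "of_nat k *\<^sub>R h \<le> w" for k using nn by force
  then show ?thesis by (rule archim0[OF h])
qed

lemma geom_sum: "(\<Sum>n\<in>{N..<N+M}. (1/2::real)^n) = 2 * (1/2)^N - 2 * (1/2)^(N+M)"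
proof (induction M)
  case 0 then show ?case by simp
next
  case (Suc M)
  have "{N..<N + Suc M} = insert (N + M) {N..<N+M}" by auto
  then have "(\<Sum>n\<in>{N..<N + Suc M}. (1/2::real)^n) = (1/2)^(N+M) + (\<Sum>n\<in>{N..<N+M}. (1/2::real)^n)"
    by simp
  then show ?case using Suc by simp
qed

lemma uo_key:
  fixes z :: "nat \<Rightarrow> 'a::vector_lattice"
  assumes w: "0 \<le> w"
    and D: "D = {d. \<exists>N. \<forall>n\<ge>N. inf (vabs (z n)) w \<le> d}"
    and v: "0 \<le> v" "\<And>d. d \<in> D \<Longrightarrow> v \<le> d"
    and oc: "\<phi> \<in> oc_dual" and l: "linear \<phi>" and p: "posf \<phi>"
    and N0: "\<And>n. N0 \<le> n \<Longrightarrow> \<phi> (vabs (z n)) \<le> (1/2)^n"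
  shows "\<phi> v = 0"
proof -
  define u where "u n = inf (vabs (z n)) w" for n
  have up: "0 \<le> u n" for n unfolding u_def using vabs_ge0 w by simp
  have Dnn: "0 \<le> d" if dD: "d \<in> D" for d
  proof -
    obtain N where "\<forall>n\<ge>N. inf (vabs (z n)) w \<le> d" using dD D by blast
    then have "u N \<le> d" unfolding u_def by blast
    then show ?thesis using up[of N] by simp
  qed
  have wD: "w \<in> D" unfolding D by auto
  have bound: "\<phi> v \<le> 2 * (1/2)^N" if N: "N0 \<le> N" for N
  proof -
    define T where "T M = sup (v - (\<Sum>n\<in>{N..<N+M}. u n)) 0" for M
    have Tanti: "T M' \<le> T M" if "M \<le> M'" for M M'
    proof -
      have "(\<Sum>n\<in>{N..<N+M}. u n) \<le> (\<Sum>n\<in>{N..<N+M'}. u n)"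
        using that up by (intro sum_mono2) auto
      then have "v - (\<Sum>n\<in>{N..<N+M'}. u n) \<le> v - (\<Sum>n\<in>{N..<N+M}. u n)" by simp
      then show ?thesis unfolding T_def by (rule sup_mono) simp
    qed
    have DT: "down_to_zero (range T)"
    proof (rule dtzI)
      show "T 0 \<in> range T" by simp
    next
      fix a b assume "a \<in> range T" "b \<in> range T"
      then obtain ma mb where "a = T ma" "b = T mb" by blast
      then show "\<exists>c\<in>range T. c \<le> a \<and> c \<le> b"
        using Tanti[of ma "max ma mb"] Tanti[of mb "max ma mb"] by auto
    next
      fix d assume "d \<in> range T" then show "0 \<le> d" unfolding T_def by auto
    next
      fix l' assume lb: "\<And>d. d \<in> range T \<Longrightarrow> l' \<le> d"
      define h where "h = sup l' 0"
      have hT: "h \<le> T M" for M unfolding h_def using lb[of "T M"] unfolding T_def by auto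
      have "h = 0"
      proof (rule shift_zero[OF Dnn wD])
        show "0 \<le> h" unfolding h_def by simp
      next
        fix d assume "d \<in> D"
        then obtain Nd where Nd: "\<forall>n\<ge>Nd. u n \<le> d" using D unfolding u_def by blast
        have "u n \<le> d - h" if n: "max N Nd \<le> n" for n
        proof -
          have "u n \<le> (\<Sum>n\<in>{N..<N+(n + 1 - N)}. u n)"
          proof -
            have "sum u {n} \<le> sum u {N..<N+(n + 1 - N)}"
              using n up by (intro sum_mono2) auto
            then show ?thesis by simp
          qed
          then have "v - (\<Sum>n\<in>{N..<N+(n + 1 - N)}. u n) \<le> v - u n" by simp
          then have "T (n + 1 - N) \<le> sup (v - u n) 0" unfolding T_def by (rule sup_mono) simp
          also have "\<dots> \<le> sup (d - u n) 0" using v(2)[OF \<open>d \<in> D\<close>] by (intro sup_mono) auto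
          also have "\<dots> = d - u n" using Nd n by (simp add: sup_absorb1)
          finally have "h \<le> d - u n" using hT[of "n + 1 - N"] by simp
          then show ?thesis by (simp add: le_diff_eq algebra_simps)
        qed
        then show "d - h \<in> D" unfolding D u_def by blast
      qed
      then show "l' \<le> 0" unfolding h_def by (metis sup.cobounded1)
    qed
    have "\<phi> v \<le> 2 * (1/2)^N + \<epsilon>" if e: "0 < \<epsilon>" for \<epsilon>
    proof -
      obtain d where d: "d \<in> range T" "\<bar>\<phi> d\<bar> < \<epsilon>" using oc_weak[OF oc DT e] by blast
      then obtain M where M: "d = T M" by blast
      have "v \<le> (\<Sum>n\<in>{N..<N+M}. u n) + T M"
      proof -
        have "v - (\<Sum>n\<in>{N..<N+M}. u n) \<le> T M" unfolding T_def by simp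
        then show ?thesis by (simp add: diff_le_eq add.commute)
      qed
      then have "\<phi> v \<le> \<phi> ((\<Sum>n\<in>{N..<N+M}. u n) + T M)" by (rule posf_mono[OF l p])
      also have "\<dots> = (\<Sum>n\<in>{N..<N+M}. \<phi> (u n)) + \<phi> (T M)"
        using linear_add[OF l] linear_sum[OF l] by simp
      also have "(\<Sum>n\<in>{N..<N+M}. \<phi> (u n)) \<le> (\<Sum>n\<in>{N..<N+M}. (1/2::real)^n)"
      proof (rule sum_mono)
        fix n assume "n \<in> {N..<N+M}"
        then have "N0 \<le> n" using N by simp
        have "\<phi> (u n) \<le> \<phi> (vabs (z n))" unfolding u_def by (rule posf_mono[OF l p]) simp
        then show "\<phi> (u n) \<le> (1/2)^n" using N0[OF \<open>N0 \<le> n\<close>] by simp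
      qed
      also have "\<dots> \<le> 2 * (1/2)^N" unfolding geom_sum by simp
      finally show ?thesis using d(2) M by simp
    qed
    then show ?thesis by (meson field_le_epsilon)
  qed
  have "\<phi> v \<le> 0"
  proof (rule ccontr)
    assume "\<not> \<phi> v \<le> 0"
    then have pos: "0 < \<phi> v / 2" by simp
    obtain N where N: "(1/2::real)^N < \<phi> v / 2" using real_arch_pow_inv[OF pos, of "1/2"] by auto
    define M where "M = max N N0"
    have h1: "(1/2::real)^M \<le> (1/2)^N" unfolding M_def by (rule power_decreasing) auto
    have h2: "\<phi> v \<le> 2 * (1/2)^M" unfolding M_def by (rule bound) simp
    from h1 h2 N show False by linarith
  qed
  moreover have "0 \<le> \<phi> v" using p v(1) unfolding posf_def by blast
  ultimately show ?thesis by simp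
qed

lemma disjoint_zero:
  fixes z :: "nat \<Rightarrow> 'a::vector_lattice"
  assumes w: "0 \<le> w"
    and D: "D = {d. \<exists>N. \<forall>n\<ge>N. inf (vabs (z n)) w \<le> d}"
    and v: "0 \<le> v" "\<And>d. d \<in> D \<Longrightarrow> v \<le> d"
    and dis: "\<And>n. inf v (vabs (z n)) = 0"
  shows "v = 0"
proof -
  define u where "u n = inf (vabs (z n)) w" for n
  have up: "0 \<le> u n" for n unfolding u_def using vabs_ge0 w by simp
  have Dnn: "0 \<le> d" if dD: "d \<in> D" for d
  proof -
    obtain N where "\<forall>n\<ge>N. inf (vabs (z n)) w \<le> d" using dD D by blast
    then have "u N \<le> d" unfolding u_def by blast
    then show ?thesis using up[of N] by simp
  qed
  have wD: "w \<in> D" unfolding D by auto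
  show ?thesis
  proof (rule shift_zero[OF Dnn wD v(1)])
    fix d assume dD: "d \<in> D"
    then obtain Nd where Nd: "\<forall>n\<ge>Nd. u n \<le> d" using D unfolding u_def by blast
    have "u n \<le> d - v" if n: "Nd \<le> n" for n
    proof -
      have "inf (u n) v \<le> inf v (vabs (z n))" unfolding u_def
        by (intro le_infI) (auto intro: le_infI1)
      then have "inf (u n) v \<le> 0" using dis by simp
      moreover have "0 \<le> inf (u n) v" using up v(1) by simp
      ultimately have "inf (u n) v = 0" by simp
      then have "u n + v = sup (u n) v" by (rule disj_add_eq_sup)
      also have "\<dots> \<le> d" using Nd n v(2)[OF dD] by simp
      finally show ?thesis by (simp add: le_diff_eq)
    qed
    then show "d - v \<in> D" unfolding D u_def by blast
  qed
qed

lemma sumI: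
  assumes I: "ideal_of_oc_dual I" and K: "finite K"
    and f: "\<And>k. k \<in> K \<Longrightarrow> f k \<in> I \<and> posf (f k)"
  shows "(\<lambda>y. \<Sum>k\<in>K. f k y) \<in> I \<and> posf (\<lambda>y. \<Sum>k\<in>K. f k y)"
  using K f
proof (induction K rule: finite_induct)
  case empty
  then show ?case using ideal_zero[OF I] posf_zero by simp
next
  case (insert a F)
  have IH: "(\<lambda>y. \<Sum>k\<in>F. f k y) \<in> I \<and> posf (\<lambda>y. \<Sum>k\<in>F. f k y)" using insert by blast
  have fa: "f a \<in> I" "posf (f a)" using insert by auto
  have eq: "(\<lambda>y. \<Sum>k\<in>insert a F. f k y) = (\<lambda>y. f a y + (\<Sum>k\<in>F. f k y))"
    using insert(1,2) by simp
  have "(\<lambda>y. f a y + (\<Sum>k\<in>F. f k y)) \<in> I" using ideal_add[OF I fa(1)] IH by blast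
  moreover have "posf (\<lambda>y. f a y + (\<Sum>k\<in>F. f k y))"
    using fa(2) IH unfolding posf_def by (simp add: add_nonneg_nonneg)
  ultimately show ?case unfolding eq by blast
qed

theorem corollary5p14:
  fixes I :: "('a::vector_lattice \<Rightarrow> real) set" and S :: "'a set" and x :: 'a
  assumes "ideal_of_oc_dual I"
    and "separates_points I"
    and "countable_sup_property TYPE('a)"
    and "convex S"
    and "x \<in> weak_closure I S"
  shows "\<exists>u. (\<forall>n. u n \<in> S) \<and> uo_conv u x"
proof -
  note I = assms(1) and sep = assms(2) and csp = assms(3) and S = assms(4) and xw = assms(5)
  define CV where "CV a \<Phi> \<longleftrightarrow> (\<forall>j. \<Phi> j \<in> I \<and> posf (\<Phi> j)) \<and>
           (\<forall>v. 0 \<le> v \<longrightarrow> (\<forall>j. \<Phi> j v = 0) \<longrightarrow> inf v a = 0)" for a and \<Phi> :: "nat \<Rightarrow> 'a \<Rightarrow> real"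
  have cc: "\<forall>a. \<exists>\<Phi>. 0 \<le> a \<longrightarrow> CV a \<Phi>"
  proof
    fix a :: 'a
    show "\<exists>\<Phi>. 0 \<le> a \<longrightarrow> CV a \<Phi>"
    proof (cases "0 \<le> a")
      case True
      from cover[OF I sep csp True] obtain \<Phi> where "CV a \<Phi>" unfolding CV_def by (elim exE)
      then show ?thesis by blast
    qed simp
  qed
  obtain cov where cov0: "\<forall>a. 0 \<le> a \<longrightarrow> CV a (cov a)"
    using choice[OF cc] by (elim exE)
  have cov: "(\<forall>j. cov a j \<in> I \<and> posf (cov a j)) \<and>
           (\<forall>v. 0 \<le> v \<longrightarrow> (\<forall>j. cov a j v = 0) \<longrightarrow> inf v a = 0)" if "0 \<le> a" for a
    using cov0 that unfolding CV_def by blast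
  have pc: "\<forall>p. \<exists>s. fst p \<in> I \<and> posf (fst p) \<and> 0 < snd p \<longrightarrow> s \<in> S \<and> fst p (vabs (s - x)) < snd p"
  proof
    fix p :: "('a \<Rightarrow> real) \<times> real"
    show "\<exists>s. fst p \<in> I \<and> posf (fst p) \<and> 0 < snd p \<longrightarrow> s \<in> S \<and> fst p (vabs (s - x)) < snd p"
    proof (cases "fst p \<in> I \<and> posf (fst p) \<and> 0 < snd p")
      case True
      then have "\<exists>s\<in>S. fst p (vabs (s - x)) < snd p"
        using approx[OF I S xw, of "fst p" "snd p"] by simp
      then show ?thesis by blast
    qed blast
  qed
  obtain pk where pk0: "\<forall>p. fst p \<in> I \<and> posf (fst p) \<and> 0 < snd p \<longrightarrow> pk p \<in> S \<and> fst p (vabs (pk p - x)) < snd p"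
    using choice[OF pc] by (elim exE)
  define pick where "pick \<phi> \<epsilon> = pk (\<phi>, \<epsilon>)" for \<phi> \<epsilon>
  have pick: "pick \<phi> \<epsilon> \<in> S \<and> \<phi> (vabs (pick \<phi> \<epsilon> - x)) < \<epsilon>" if "\<phi> \<in> I" "posf \<phi>" "0 < \<epsilon>" for \<phi> \<epsilon>
    using pk0[rule_format, of "(\<phi>, \<epsilon>)"] that unfolding pick_def by simp
  define Psi where "Psi l = (\<lambda>y. \<Sum>p\<in>{..<length l} \<times> {..<length l}. cov (vabs (l ! fst p - x)) (snd p) y)"
    for l :: "'a list"
  have PsiI: "Psi l \<in> I \<and> posf (Psi l)" for l
    unfolding Psi_def using cov[OF vabs_ge0] by (intro sumI[OF I]) auto
  define L where "L = rec_nat [] (\<lambda>n l. l @ [pick (Psi l) ((1/2)^n)])"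
  define s where "s n = pick (Psi (L n)) ((1/2)^n)" for n
  have L0: "L 0 = []" unfolding L_def by simp
  have LS: "L (Suc n) = L n @ [s n]" for n unfolding L_def s_def by simp
  have len: "length (L n) = n" for n by (induction n) (simp_all add: L0 LS)
  have nth: "L n ! k = s k" if "k < n" for n k
    using that
  proof (induction n)
    case 0 then show ?case by simp
  next
    case (Suc n)
    then show ?case by (cases "k < n") (auto simp: LS nth_append len less_Suc_eq)
  qed
  have sS: "s n \<in> S" "Psi (L n) (vabs (s n - x)) < (1/2)^n" for n
    using pick[OF PsiI[THEN conjunct1] PsiI[THEN conjunct2], of "(1/2)^n" "L n"]
    unfolding s_def by auto
  have small: "cov (vabs (s k - x)) j (vabs (s n - x)) < (1/2)^n" if kj: "k < n" "j < n" for k j n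
  proof -
    have eq: "Psi (L n) y = (\<Sum>p\<in>{..<n} \<times> {..<n}. cov (vabs (s (fst p) - x)) (snd p) y)" for y
      unfolding Psi_def len using nth by (intro sum.cong) auto
    define F where "F p = cov (vabs (s (fst p) - x)) (snd p) (vabs (s n - x))" for p :: "nat \<times> nat"
    have Fnn: "0 \<le> F p" for p
      using cov[OF vabs_ge0, of "s (fst p) - x"] vabs_ge0[of "s n - x"] unfolding posf_def F_def by blast
    have "(\<Sum>p\<in>{(k, j)}. F p) \<le> (\<Sum>p\<in>{..<n} \<times> {..<n}. F p)"
      by (rule sum_mono2) (auto simp: kj Fnn)
    then have "cov (vabs (s k - x)) j (vabs (s n - x)) \<le> Psi (L n) (vabs (s n - x))"
      unfolding eq F_def by simp
    then show ?thesis using sS(2)[of n] by simp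
  qed
  have "uo_conv s x"
    unfolding uo_conv_def order_conv_def
  proof (intro allI)
    fix y :: 'a
    define w where "w = vabs y"
    have w: "0 \<le> w" unfolding w_def by (rule vabs_ge0)
    define z where "z n = s n - x" for n
    define D where "D = {d. \<exists>N. \<forall>n\<ge>N. inf (vabs (z n)) w \<le> d}"
    have Dnn: "0 \<le> d" if dD: "d \<in> D" for d
    proof -
      obtain N where "\<forall>n\<ge>N. inf (vabs (z n)) w \<le> d" using dD unfolding D_def by blast
      then have "inf (vabs (z N)) w \<le> d" by blast
      moreover have "0 \<le> inf (vabs (z N)) w" using w vabs_ge0 by simp
      ultimately show ?thesis by (rule order_trans[rotated])
    qed
    have "down_to_zero D"
    proof (rule dtzI)
      show "w \<in> D" unfolding D_def by auto
    next
      fix a b assume "a \<in> D" "b \<in> D"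
      then obtain Na Nb where "\<forall>n\<ge>Na. inf (vabs (z n)) w \<le> a" "\<forall>n\<ge>Nb. inf (vabs (z n)) w \<le> b"
        unfolding D_def by blast
      then have "\<forall>n\<ge>max Na Nb. inf (vabs (z n)) w \<le> inf a b" by simp
      then have "inf a b \<in> D" unfolding D_def by blast
      then show "\<exists>c\<in>D. c \<le> a \<and> c \<le> b" by (intro bexI[of _ "inf a b"]) auto
    next
      fix d assume "d \<in> D" then show "0 \<le> d" by (rule Dnn)
    next
      fix l assume lb: "\<And>d. d \<in> D \<Longrightarrow> l \<le> d"
      define v where "v = sup l 0"
      have v: "0 \<le> v" "\<And>d. d \<in> D \<Longrightarrow> v \<le> d" unfolding v_def using lb Dnn by auto
      have dis: "inf v (vabs (z k)) = 0" for k
      proof -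
        have ck: "(\<forall>j. cov (vabs (z k)) j \<in> I \<and> posf (cov (vabs (z k)) j)) \<and>
           (\<forall>v. 0 \<le> v \<longrightarrow> (\<forall>j. cov (vabs (z k)) j v = 0) \<longrightarrow> inf v (vabs (z k)) = 0)"
          using cov[OF vabs_ge0] by blast
        have "cov (vabs (z k)) j v = 0" for j
        proof (rule uo_key[OF w D_def v])
          show "cov (vabs (z k)) j \<in> oc_dual" using ck ideal_sub[OF I] by blast
          show "linear (cov (vabs (z k)) j)" using ck ideal_linear[OF I] by blast
          show "posf (cov (vabs (z k)) j)" using ck by blast
        next
          fix n assume "Suc (max k j) \<le> n"
          then have "k < n" "j < n" by auto
          then have "cov (vabs (s k - x)) j (vabs (s n - x)) < (1/2)^n" by (rule small)
          then show "cov (vabs (z k)) j (vabs (z n)) \<le> (1/2)^n"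
            unfolding z_def by (rule less_imp_le)
        qed
        then show ?thesis using ck v(1) by blast
      qed
      have "v = 0" by (rule disjoint_zero[OF w D_def v dis])
      then show "l \<le> 0" unfolding v_def by (metis sup.cobounded1)
    qed
    moreover have "\<forall>d\<in>D. \<exists>N. \<forall>n\<ge>N. vabs (inf (vabs (s n - x)) (vabs y) - 0) \<le> d"
    proof
      fix d assume "d \<in> D"
      then obtain N where N: "\<forall>n\<ge>N. inf (vabs (z n)) w \<le> d" unfolding D_def by blast
      have "vabs (inf (vabs (s n - x)) (vabs y) - 0) = inf (vabs (z n)) w" for n
      proof -
        have "0 \<le> inf (vabs (s n - x)) (vabs y)" using vabs_ge0[of "s n - x"] vabs_ge0[of y] by simp
        then show ?thesis unfolding z_def w_def by (simp add: vabs_nonneg)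
      qed
      then show "\<exists>N. \<forall>n\<ge>N. vabs (inf (vabs (s n - x)) (vabs y) - 0) \<le> d" using N by auto
    qed
    ultimately show "\<exists>D. down_to_zero D \<and> (\<forall>d\<in>D. \<exists>N. \<forall>n\<ge>N. vabs (inf (vabs (s n - x)) (vabs y) - 0) \<le> d)"
      by blast
  qed
  then show ?thesis using sS(1) by blast
qed

end
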